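(* There is a connected $4$-colouring of the edges of $K_{17}^{(3)}$ with no multicoloured $4$-set.
   Context: $K_n^{(3)}$ is the complete $3$-uniform hypergraph on $n$ vertices (edges are all $3$-subsets). A strong path in a $3$-uniform hypergraph $H$ is a sequence of edges $E_1,\dots,E_m$ of $H$ with $|E_t\cap E_{t+1}|=2$ for all $t$. $H$ is connected if for any two $2$-subsets $\{u,v\},\{u',v'\}$ of $V(H)$ there is a strong path $E_1,\dots,E_m$ in $H$ with $\{u,v\}\subseteq E_1$ and $\{u',v'\}\subseteq E_m$. A colouring of the edges of $K_n^{(3)}$ is connected if for each colour, the $3$-graph on all $n$ vertices formed by the edges of that colour is connected. A $4$-set of vertices is multicoloured if its four $3$-subsets receive four distinct colours. *)

theory Defs
  imports Main
begin

definition triples :: "'a set \<Rightarrow> 'a set set" where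
  "triples V = {e. e \<subseteq> V \<and> card e = 3}"

definition pairs :: "'a set \<Rightarrow> 'a set set" where
  "pairs V = {p. p \<subseteq> V \<and> card p = 2}"

definition strong_path :: "'a set set \<Rightarrow> 'a set list \<Rightarrow> bool" where
  "strong_path H Es \<longleftrightarrow> Es \<noteq> [] \<and> set Es \<subseteq> H \<and>
     (\<forall>t. Suc t < length Es \<longrightarrow> card (Es ! t \<inter> Es ! Suc t) = 2)"

definition hconnected :: "'a set \<Rightarrow> 'a set set \<Rightarrow> bool" where
  "hconnected V H \<longleftrightarrow> (\<forall>p\<in>pairs V. \<forall>q\<in>pairs V.
     \<exists>Es. strong_path H Es \<and> p \<subseteq> hd Es \<and> q \<subseteq> last Es)"

definition connected_colouring :: "'a set \<Rightarrow> nat \<Rightarrow> ('a set \<Rightarrow> nat) \<Rightarrow> bool" where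
  "connected_colouring V k c \<longleftrightarrow> (\<forall>e\<in>triples V. c e < k) \<and>
     (\<forall>i<k. hconnected V {e\<in>triples V. c e = i})"

definition multicoloured :: "('a set \<Rightarrow> nat) \<Rightarrow> 'a set \<Rightarrow> bool" where
  "multicoloured c S \<longleftrightarrow> card (c ` triples S) = 4"

end

theory Submission
  imports Defs
begin


definition reach :: "'a set set \<Rightarrow> 'a set \<Rightarrow> 'a set \<Rightarrow> bool" where
  "reach H p q \<longleftrightarrow> (\<exists>Es. strong_path H Es \<and> p \<subseteq> hd Es \<and> q \<subseteq> last Es)"

lemma sp_single: "e \<in> H \<Longrightarrow> strong_path H [e]"
  by (simp add: strong_path_def)

lemma sp_append:
  assumes "strong_path H xs" "strong_path H ys" "card (last xs \<inter> hd ys) = 2"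
  shows "strong_path H (xs @ ys)"
  unfolding strong_path_def
proof (intro conjI allI impI)
  show "xs @ ys \<noteq> []" using assms(1) by (simp add: strong_path_def)
  show "set (xs @ ys) \<subseteq> H" using assms(1,2) by (simp add: strong_path_def)
  fix t assume t: "Suc t < length (xs @ ys)"
  have xs: "xs \<noteq> []" and ys: "ys \<noteq> []" using assms(1,2) by (auto simp: strong_path_def)
  consider "Suc t < length xs" | "Suc t = length xs" | "Suc t > length xs" by linarith
  then show "card ((xs @ ys) ! t \<inter> (xs @ ys) ! Suc t) = 2"
  proof cases
    case 1 then show ?thesis using assms(1) by (simp add: strong_path_def nth_append)
  next
    case 2
    then have "t = length xs - 1" by simp
    then have "(xs @ ys) ! t = last xs" using xs by (simp add: nth_append last_conv_nth)
    moreover have "(xs @ ys) ! Suc t = hd ys" using 2 ys by (simp add: nth_append hd_conv_nth)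
    ultimately show ?thesis using assms(3) by simp
  next
    case 3
    then have "Suc (t - length xs) < length ys" using t by simp
    then have "card (ys ! (t - length xs) \<inter> ys ! Suc (t - length xs)) = 2"
      using assms(2) by (simp add: strong_path_def)
    moreover have "Suc t - length xs = Suc (t - length xs)" using 3 by simp
    ultimately show ?thesis using 3 by (simp add: nth_append)
  qed
qed

lemma sp_rev:
  assumes "strong_path H xs" shows "strong_path H (rev xs)"
  unfolding strong_path_def
proof (intro conjI allI impI)
  show "rev xs \<noteq> []" "set (rev xs) \<subseteq> H" using assms by (auto simp: strong_path_def)
  fix t assume t: "Suc t < length (rev xs)"
  define u where "u = length xs - Suc (Suc t)"
  have u: "Suc u < length xs" using t by (simp add: u_def)
  have "card (xs ! u \<inter> xs ! Suc u) = 2" using assms u by (simp add: strong_path_def)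
  moreover have "rev xs ! t = xs ! Suc u" using t by (simp add: rev_nth u_def Suc_diff_Suc)
  moreover have "rev xs ! Suc t = xs ! u" using t by (simp add: rev_nth u_def)
  ultimately show "card (rev xs ! t \<inter> rev xs ! Suc t) = 2" by (simp add: Int_commute)
qed

lemma sp_prefix:
  assumes "strong_path H (xs @ [e])" "xs \<noteq> []"
  shows "strong_path H xs" "card (last xs \<inter> e) = 2"
proof -
  show "strong_path H xs" unfolding strong_path_def
  proof (intro conjI allI impI)
    show "xs \<noteq> []" by (rule assms(2))
    show "set xs \<subseteq> H" using assms(1) by (simp add: strong_path_def)
    fix t assume t: "Suc t < length xs"
    then have "Suc t < length (xs @ [e])" by simp
    then have "card ((xs @ [e]) ! t \<inter> (xs @ [e]) ! Suc t) = 2"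
      using assms(1) unfolding strong_path_def by blast
    then show "card (xs ! t \<inter> xs ! Suc t) = 2" using t by (simp add: nth_append)
  qed
  have "Suc (length xs - 1) < length (xs @ [e])" using assms(2) by simp
  then have "card ((xs @ [e]) ! (length xs - 1) \<inter> (xs @ [e]) ! Suc (length xs - 1)) = 2"
    using assms(1) unfolding strong_path_def by blast
  moreover have "length xs - 1 < length xs" using assms(2) by simp
  ultimately show "card (last xs \<inter> e) = 2" using assms(2)
    by (simp add: nth_append last_conv_nth)
qed

lemma reach_edge: "e \<in> H \<Longrightarrow> p \<subseteq> e \<Longrightarrow> q \<subseteq> e \<Longrightarrow> reach H p q"
  unfolding reach_def by (rule exI[of _ "[e]"]) (simp add: sp_single)

lemma reach_sym: "reach H p q \<Longrightarrow> reach H q p"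
proof -
  assume "reach H p q"
  then obtain Es where Es: "strong_path H Es" "p \<subseteq> hd Es" "q \<subseteq> last Es"
    unfolding reach_def by blast
  have "strong_path H (rev Es)" using Es(1) by (rule sp_rev)
  moreover have "q \<subseteq> hd (rev Es)" using Es(3) by (simp add: hd_rev)
  moreover have "p \<subseteq> last (rev Es)" using Es(2) by (simp add: last_rev)
  ultimately show ?thesis unfolding reach_def by blast
qed

lemma reach_step:
  assumes H: "\<And>e. e \<in> H \<Longrightarrow> finite e \<and> card e = 3"
  and r: "reach H p q" and e: "e \<in> H" "q \<subseteq> e" "r \<subseteq> e" and q: "card q = 2"
  shows "reach H p r"
proof -
  obtain Es where Es: "strong_path H Es" "p \<subseteq> hd Es" "q \<subseteq> last Es"
    using r unfolding reach_def by blast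
  show ?thesis
  proof (cases "last Es = e")
    case True then show ?thesis using Es e unfolding reach_def by blast
  next
    case False
    have ne: "Es \<noteq> []" using Es by (simp add: strong_path_def)
    have lH: "last Es \<in> H" using Es ne by (auto simp: strong_path_def)
    have fe: "finite e" "card e = 3" using H e by auto
    have fl: "finite (last Es)" "card (last Es) = 3" using H lH by auto
    have "last Es \<inter> e \<subset> e"
    proof
      show "last Es \<inter> e \<subseteq> e" by blast
      show "last Es \<inter> e \<noteq> e"
      proof
        assume "last Es \<inter> e = e"
        then have "e \<subseteq> last Es" by blast
        then have "e = last Es" using fe fl by (simp add: card_subset_eq)
        then show False using False by simp
      qed
    qed
    then have c1: "card (last Es \<inter> e) < 3" using psubset_card_mono[OF fe(1)] fe(2) by simp
    have "q \<subseteq> last Es \<inter> e" using Es e by blast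
    moreover have "finite (last Es \<inter> e)" using fe(1) by simp
    ultimately have c2: "card (last Es \<inter> e) \<ge> 2" using q card_mono by metis
    have "strong_path H (Es @ [e])"
      by (rule sp_append[OF Es(1) sp_single[OF e(1)]]) (use c1 c2 in simp)
    then show ?thesis unfolding reach_def using Es ne e
      by (intro exI[of _ "Es @ [e]"]) simp
  qed
qed

lemma reach_trans_path:
  assumes H: "\<And>e. e \<in> H \<Longrightarrow> finite e \<and> card e = 3"
  shows "strong_path H Es \<Longrightarrow> reach H p q \<Longrightarrow> q \<subseteq> hd Es \<Longrightarrow> card q = 2 \<Longrightarrow> r \<subseteq> last Es \<Longrightarrow> reach H p r"
proof (induction Es arbitrary: r rule: rev_induct)
  case Nil then show ?case by (simp add: strong_path_def)
next
  case (snoc e xs)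
  have eH: "e \<in> H" using snoc.prems(1) by (simp add: strong_path_def)
  show ?case
  proof (cases "xs = []")
    case True
    then have qe: "q \<subseteq> e" and re: "r \<subseteq> e" using snoc.prems(3,5) by simp_all
    show ?thesis by (rule reach_step[OF H snoc.prems(2) eH qe re snoc.prems(4)])
  next
    case False
    have sp: "strong_path H xs" "card (last xs \<inter> e) = 2"
      using sp_prefix[OF snoc.prems(1) False] by auto
    have "q \<subseteq> hd xs" using snoc.prems(3) False by simp
    then have rr: "reach H p (last xs \<inter> e)"
      using snoc.IH[OF sp(1) snoc.prems(2) _ snoc.prems(4)] by simp
    have re: "r \<subseteq> e" using snoc.prems(5) by simp
    have qe: "last xs \<inter> e \<subseteq> e" by blast
    show ?thesis by (rule reach_step[OF H rr eH qe re sp(2)])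
  qed
qed

lemma reach_trans:
  assumes H: "\<And>e. e \<in> H \<Longrightarrow> finite e \<and> card e = 3"
  and "reach H p q" "reach H q r" "card q = 2"
  shows "reach H p r"
proof -
  obtain Es where Es: "strong_path H Es" "q \<subseteq> hd Es" "r \<subseteq> last Es"
    using assms(3) unfolding reach_def by blast
  show ?thesis by (rule reach_trans_path[OF H Es(1) assms(2) Es(2) assms(4) Es(3)])
qed

lemma hconn_from_base:
  assumes H: "\<And>e. e \<in> H \<Longrightarrow> finite e \<and> card e = 3"
  and base: "\<And>p. p \<in> pairs V \<Longrightarrow> reach H p0 p" and p0: "card p0 = 2"
  shows "hconnected V H"
  unfolding hconnected_def
proof (intro ballI)
  fix p q assume "p \<in> pairs V" "q \<in> pairs V"
  then have "reach H p p0" "reach H p0 q" using base reach_sym by blast+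
  then have "reach H p q" using reach_trans[OF H _ _ p0] by blast
  then show "\<exists>Es. strong_path H Es \<and> p \<subseteq> hd Es \<and> q \<subseteq> last Es" by (simp add: reach_def)
qed


definition cls :: "nat \<Rightarrow> nat" where
  "cls x = (if x < 3 then 0 else if x < 6 then 1 else if x < 9 then 2 else if x < 11 then 3
     else if x < 13 then 4 else if x < 15 then 5 else 6)"

definition key :: "nat set \<Rightarrow> nat" where
  "key e = (\<Sum>x\<in>e. 4 ^ cls x)"

definition tbl :: "(nat \<times> nat) list" where
  "tbl = [(3,3), (6,2), (18,3), (66,0), (258,3), (1026,1), (4098,3), (9,0), (21,2), (69,3), (261,0), (1029,1), (4101,1), (33,2), (81,1), (273,1), (1041,3), (4113,0), (129,2), (321,3), (1089,0), (4161,1), (513,3), (1281,0), (4353,2), (2049,0), (5121,2), (8193,2), (12,1), (24,0), (72,2), (264,1), (1032,3), (4104,2), (36,0), (84,1), (276,2), (1044,3), (4116,0), (132,1), (324,1), (1092,0), (4164,0), (516,3), (1284,2), (4356,2), (2052,3), (5124,3), (8196,1), (48,3), (96,3), (288,1), (1056,2), (4128,3), (144,0), (336,3), (1104,1), (4176,2), (528,2), (1296,1), (4368,0), (2064,2), (5136,0), (8208,1), (384,2), (1152,3), (4224,0), (576,0), (1344,0), (4416,2), (2112,3), (5184,2), (8256,3), (1536,1), (4608,3), (2304,3), (5376,1), (8448,3), (6144,1), (9216,0)]"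

definition g :: "nat \<Rightarrow> nat" where
  "g k = (case map_of tbl k of Some v \<Rightarrow> v | None \<Rightarrow> 0)"

definition col :: "nat set \<Rightarrow> nat" where
  "col e = g (key e)"

definition Hc :: "nat \<Rightarrow> nat set set" where
  "Hc a = {e \<in> triples {0..<17}. col e = a}"

lemma cls_lt: "cls x < 7"
  by (simp add: cls_def)

lemma tbl_lt: "list_all (\<lambda>(k,v). v < 4) tbl"
  by (simp add: tbl_def)

lemma g_lt: "g k < 4"
proof (cases "map_of tbl k")
  case None then show ?thesis by (simp add: g_def)
next
  case (Some v)
  then have "(k, v) \<in> set tbl" by (rule map_of_SomeD)
  then have "v < 4" using tbl_lt by (auto simp: list_all_iff)
  then show ?thesis using Some by (simp add: g_def)
qed

lemma col3:
  assumes "x < y" "y < z"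
  shows "col {x,y,z} = g (4 ^ cls x + 4 ^ cls y + 4 ^ cls z)"
proof -
  have a: "x \<notin> {y,z}" and b: "y \<notin> {z}" using assms by auto
  have "sum (\<lambda>x. 4 ^ cls x) {x,y,z} = 4 ^ cls x + sum (\<lambda>x. 4 ^ cls x) {y,z}"
    by (rule sum.insert[OF _ a]) simp
  also have "sum (\<lambda>x. 4 ^ cls x) {y,z} = (4::nat) ^ cls y + sum (\<lambda>x. 4 ^ cls x) {z}"
    by (rule sum.insert[OF _ b]) simp
  also have "sum (\<lambda>x. 4 ^ cls x) {z} = (4::nat) ^ cls z"
    by simp
  finally have "key {x,y,z} = 4 ^ cls x + (4 ^ cls y + 4 ^ cls z)"
    unfolding key_def .
  then show ?thesis unfolding col_def by (simp only: add.assoc)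
qed

lemma Hc_card: "e \<in> Hc a \<Longrightarrow> finite e \<and> card e = 3"
proof -
  assume "e \<in> Hc a"
  then have c: "card e = 3" by (simp add: Hc_def triples_def)
  then have "finite e" by (intro card_ge_0_finite) simp
  with c show ?thesis by simp
qed

lemma mem_Hc:
  assumes "x < y" "y < z" "z < 17" "col {x,y,z} = a"
  shows "{x,y,z} \<in> Hc a"
proof -
  have "card {x,y,z} = 3" using assms(1,2) by simp
  moreover have "{x,y,z} \<subseteq> {0..<17}" using assms(1-3) by simp
  ultimately show ?thesis using assms(4) unfolding Hc_def triples_def by blast
qed

lemma edge_Hc: "col {x,y,z} = a \<Longrightarrow> p \<subseteq> {x,y,z} \<Longrightarrow> q \<subseteq> {x,y,z} \<Longrightarrow> x < y \<Longrightarrow> y < z \<Longrightarrow> z < 17 \<Longrightarrow> reach (Hc a) p q"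
  by (rule reach_edge[OF mem_Hc])

lemma step_Hc: "col {x,y,z} = a \<Longrightarrow> reach (Hc a) p q \<Longrightarrow> r \<subseteq> {x,y,z} \<Longrightarrow> q \<subseteq> {x,y,z} \<Longrightarrow> card q = 2 \<Longrightarrow> x < y \<Longrightarrow> y < z \<Longrightarrow> z < 17 \<Longrightarrow> reach (Hc a) p r"
  by (rule reach_step[OF Hc_card _ mem_Hc])

lemma All_less_numeral: "(\<forall>i<numeral k. P i) = (P (pred_numeral k) \<and> (\<forall>i<pred_numeral k. P (i::nat)))"
  by (subst numeral_eq_Suc) (rule All_less_Suc)

lemma card01: "card {0::nat,1} = 2" by simp

lemma All_less_one: "(\<forall>i<(1::nat). P i) = P 0"
  by auto

lemma pair_cases:
  assumes "p \<in> pairs {0..<17::nat}" "\<forall>b<17. \<forall>a<b. R {a,b}"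
  shows "R p"
proof -
  obtain x y where xy: "p = {x,y}" "x \<noteq> y" using assms(1) by (auto simp: pairs_def card_2_iff)
  have "x < 17" "y < 17" using assms(1) xy by (auto simp: pairs_def)
  show ?thesis
  proof (cases "x < y")
    case True then show ?thesis using assms(2) xy `y < 17` by blast
  next
    case False then have "y < x" using xy by simp
    then show ?thesis using assms(2) xy `x < 17` by (simp add: insert_commute)
  qed
qed

lemma conn0: "hconnected {0..<17} (Hc 0)"
proof -
  have r0: "reach (Hc 0) {0,1} {0,1}" by (rule edge_Hc[of 0 1 9 0 "{0,1}" "{0,1}"]) (simp_all add: col3 cls_def g_def tbl_def)
  have r1: "reach (Hc 0) {0,1} {0,9}" by (rule step_Hc[of 0 1 9 0 "{0,1}" "{0,1}" "{0,9}", OF _ r0]) (simp_all add: col3 cls_def g_def tbl_def)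
  have r2: "reach (Hc 0) {0,1} {1,9}" by (rule step_Hc[of 0 1 9 0 "{0,1}" "{0,1}" "{1,9}", OF _ r0]) (simp_all add: col3 cls_def g_def tbl_def)
  have r3: "reach (Hc 0) {0,1} {0,10}" by (rule step_Hc[of 0 1 10 0 "{0,1}" "{0,1}" "{0,10}", OF _ r0]) (simp_all add: col3 cls_def g_def tbl_def)
  have r4: "reach (Hc 0) {0,1} {1,10}" by (rule step_Hc[of 0 1 10 0 "{0,1}" "{0,1}" "{1,10}", OF _ r0]) (simp_all add: col3 cls_def g_def tbl_def)
  have r5: "reach (Hc 0) {0,1} {0,2}" by (rule step_Hc[of 0 2 9 0 "{0,1}" "{0,9}" "{0,2}", OF _ r1]) (simp_all add: col3 cls_def g_def tbl_def)
  have r6: "reach (Hc 0) {0,1} {2,9}" by (rule step_Hc[of 0 2 9 0 "{0,1}" "{0,9}" "{2,9}", OF _ r1]) (simp_all add: col3 cls_def g_def tbl_def)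
  have r7: "reach (Hc 0) {0,1} {0,13}" by (rule step_Hc[of 0 9 13 0 "{0,1}" "{0,9}" "{0,13}", OF _ r1]) (simp_all add: col3 cls_def g_def tbl_def)
  have r8: "reach (Hc 0) {0,1} {9,13}" by (rule step_Hc[of 0 9 13 0 "{0,1}" "{0,9}" "{9,13}", OF _ r1]) (simp_all add: col3 cls_def g_def tbl_def)
  have r9: "reach (Hc 0) {0,1} {0,14}" by (rule step_Hc[of 0 9 14 0 "{0,1}" "{0,9}" "{0,14}", OF _ r1]) (simp_all add: col3 cls_def g_def tbl_def)
  have r10: "reach (Hc 0) {0,1} {9,14}" by (rule step_Hc[of 0 9 14 0 "{0,1}" "{0,9}" "{9,14}", OF _ r1]) (simp_all add: col3 cls_def g_def tbl_def)
  have r11: "reach (Hc 0) {0,1} {1,2}" by (rule step_Hc[of 1 2 9 0 "{0,1}" "{1,9}" "{1,2}", OF _ r2]) (simp_all add: col3 cls_def g_def tbl_def)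
  have r12: "reach (Hc 0) {0,1} {1,13}" by (rule step_Hc[of 1 9 13 0 "{0,1}" "{1,9}" "{1,13}", OF _ r2]) (simp_all add: col3 cls_def g_def tbl_def)
  have r13: "reach (Hc 0) {0,1} {1,14}" by (rule step_Hc[of 1 9 14 0 "{0,1}" "{1,9}" "{1,14}", OF _ r2]) (simp_all add: col3 cls_def g_def tbl_def)
  have r14: "reach (Hc 0) {0,1} {2,10}" by (rule step_Hc[of 0 2 10 0 "{0,1}" "{0,10}" "{2,10}", OF _ r3]) (simp_all add: col3 cls_def g_def tbl_def)
  have r15: "reach (Hc 0) {0,1} {10,13}" by (rule step_Hc[of 0 10 13 0 "{0,1}" "{0,10}" "{10,13}", OF _ r3]) (simp_all add: col3 cls_def g_def tbl_def)
  have r16: "reach (Hc 0) {0,1} {10,14}" by (rule step_Hc[of 0 10 14 0 "{0,1}" "{0,10}" "{10,14}", OF _ r3]) (simp_all add: col3 cls_def g_def tbl_def)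
  have r17: "reach (Hc 0) {0,1} {2,13}" by (rule step_Hc[of 2 9 13 0 "{0,1}" "{2,9}" "{2,13}", OF _ r6]) (simp_all add: col3 cls_def g_def tbl_def)
  have r18: "reach (Hc 0) {0,1} {2,14}" by (rule step_Hc[of 2 9 14 0 "{0,1}" "{2,9}" "{2,14}", OF _ r6]) (simp_all add: col3 cls_def g_def tbl_def)
  have r19: "reach (Hc 0) {0,1} {0,11}" by (rule step_Hc[of 0 11 13 0 "{0,1}" "{0,13}" "{0,11}", OF _ r7]) (simp_all add: col3 cls_def g_def tbl_def)
  have r20: "reach (Hc 0) {0,1} {11,13}" by (rule step_Hc[of 0 11 13 0 "{0,1}" "{0,13}" "{11,13}", OF _ r7]) (simp_all add: col3 cls_def g_def tbl_def)
  have r21: "reach (Hc 0) {0,1} {0,12}" by (rule step_Hc[of 0 12 13 0 "{0,1}" "{0,13}" "{0,12}", OF _ r7]) (simp_all add: col3 cls_def g_def tbl_def)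
  have r22: "reach (Hc 0) {0,1} {12,13}" by (rule step_Hc[of 0 12 13 0 "{0,1}" "{0,13}" "{12,13}", OF _ r7]) (simp_all add: col3 cls_def g_def tbl_def)
  have r23: "reach (Hc 0) {0,1} {13,14}" by (rule step_Hc[of 0 13 14 0 "{0,1}" "{0,13}" "{13,14}", OF _ r7]) (simp_all add: col3 cls_def g_def tbl_def)
  have r24: "reach (Hc 0) {0,1} {3,9}" by (rule step_Hc[of 3 9 13 0 "{0,1}" "{9,13}" "{3,9}", OF _ r8]) (simp_all add: col3 cls_def g_def tbl_def)
  have r25: "reach (Hc 0) {0,1} {3,13}" by (rule step_Hc[of 3 9 13 0 "{0,1}" "{9,13}" "{3,13}", OF _ r8]) (simp_all add: col3 cls_def g_def tbl_def)
  have r26: "reach (Hc 0) {0,1} {4,9}" by (rule step_Hc[of 4 9 13 0 "{0,1}" "{9,13}" "{4,9}", OF _ r8]) (simp_all add: col3 cls_def g_def tbl_def)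
  have r27: "reach (Hc 0) {0,1} {4,13}" by (rule step_Hc[of 4 9 13 0 "{0,1}" "{9,13}" "{4,13}", OF _ r8]) (simp_all add: col3 cls_def g_def tbl_def)
  have r28: "reach (Hc 0) {0,1} {5,9}" by (rule step_Hc[of 5 9 13 0 "{0,1}" "{9,13}" "{5,9}", OF _ r8]) (simp_all add: col3 cls_def g_def tbl_def)
  have r29: "reach (Hc 0) {0,1} {5,13}" by (rule step_Hc[of 5 9 13 0 "{0,1}" "{9,13}" "{5,13}", OF _ r8]) (simp_all add: col3 cls_def g_def tbl_def)
  have r30: "reach (Hc 0) {0,1} {9,11}" by (rule step_Hc[of 9 11 13 0 "{0,1}" "{9,13}" "{9,11}", OF _ r8]) (simp_all add: col3 cls_def g_def tbl_def)
  have r31: "reach (Hc 0) {0,1} {9,12}" by (rule step_Hc[of 9 12 13 0 "{0,1}" "{9,13}" "{9,12}", OF _ r8]) (simp_all add: col3 cls_def g_def tbl_def)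
  have r32: "reach (Hc 0) {0,1} {11,14}" by (rule step_Hc[of 0 11 14 0 "{0,1}" "{0,14}" "{11,14}", OF _ r9]) (simp_all add: col3 cls_def g_def tbl_def)
  have r33: "reach (Hc 0) {0,1} {12,14}" by (rule step_Hc[of 0 12 14 0 "{0,1}" "{0,14}" "{12,14}", OF _ r9]) (simp_all add: col3 cls_def g_def tbl_def)
  have r34: "reach (Hc 0) {0,1} {3,14}" by (rule step_Hc[of 3 9 14 0 "{0,1}" "{9,14}" "{3,14}", OF _ r10]) (simp_all add: col3 cls_def g_def tbl_def)
  have r35: "reach (Hc 0) {0,1} {4,14}" by (rule step_Hc[of 4 9 14 0 "{0,1}" "{9,14}" "{4,14}", OF _ r10]) (simp_all add: col3 cls_def g_def tbl_def)
  have r36: "reach (Hc 0) {0,1} {5,14}" by (rule step_Hc[of 5 9 14 0 "{0,1}" "{9,14}" "{5,14}", OF _ r10]) (simp_all add: col3 cls_def g_def tbl_def)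
  have r37: "reach (Hc 0) {0,1} {1,11}" by (rule step_Hc[of 1 11 13 0 "{0,1}" "{1,13}" "{1,11}", OF _ r12]) (simp_all add: col3 cls_def g_def tbl_def)
  have r38: "reach (Hc 0) {0,1} {1,12}" by (rule step_Hc[of 1 12 13 0 "{0,1}" "{1,13}" "{1,12}", OF _ r12]) (simp_all add: col3 cls_def g_def tbl_def)
  have r39: "reach (Hc 0) {0,1} {3,10}" by (rule step_Hc[of 3 10 13 0 "{0,1}" "{10,13}" "{3,10}", OF _ r15]) (simp_all add: col3 cls_def g_def tbl_def)
  have r40: "reach (Hc 0) {0,1} {4,10}" by (rule step_Hc[of 4 10 13 0 "{0,1}" "{10,13}" "{4,10}", OF _ r15]) (simp_all add: col3 cls_def g_def tbl_def)
  have r41: "reach (Hc 0) {0,1} {5,10}" by (rule step_Hc[of 5 10 13 0 "{0,1}" "{10,13}" "{5,10}", OF _ r15]) (simp_all add: col3 cls_def g_def tbl_def)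
  have r42: "reach (Hc 0) {0,1} {10,11}" by (rule step_Hc[of 10 11 13 0 "{0,1}" "{10,13}" "{10,11}", OF _ r15]) (simp_all add: col3 cls_def g_def tbl_def)
  have r43: "reach (Hc 0) {0,1} {10,12}" by (rule step_Hc[of 10 12 13 0 "{0,1}" "{10,13}" "{10,12}", OF _ r15]) (simp_all add: col3 cls_def g_def tbl_def)
  have r44: "reach (Hc 0) {0,1} {2,11}" by (rule step_Hc[of 2 11 13 0 "{0,1}" "{2,13}" "{2,11}", OF _ r17]) (simp_all add: col3 cls_def g_def tbl_def)
  have r45: "reach (Hc 0) {0,1} {2,12}" by (rule step_Hc[of 2 12 13 0 "{0,1}" "{2,13}" "{2,12}", OF _ r17]) (simp_all add: col3 cls_def g_def tbl_def)
  have r46: "reach (Hc 0) {0,1} {0,3}" by (rule step_Hc[of 0 3 11 0 "{0,1}" "{0,11}" "{0,3}", OF _ r19]) (simp_all add: col3 cls_def g_def tbl_def)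
  have r47: "reach (Hc 0) {0,1} {3,11}" by (rule step_Hc[of 0 3 11 0 "{0,1}" "{0,11}" "{3,11}", OF _ r19]) (simp_all add: col3 cls_def g_def tbl_def)
  have r48: "reach (Hc 0) {0,1} {0,4}" by (rule step_Hc[of 0 4 11 0 "{0,1}" "{0,11}" "{0,4}", OF _ r19]) (simp_all add: col3 cls_def g_def tbl_def)
  have r49: "reach (Hc 0) {0,1} {4,11}" by (rule step_Hc[of 0 4 11 0 "{0,1}" "{0,11}" "{4,11}", OF _ r19]) (simp_all add: col3 cls_def g_def tbl_def)
  have r50: "reach (Hc 0) {0,1} {0,5}" by (rule step_Hc[of 0 5 11 0 "{0,1}" "{0,11}" "{0,5}", OF _ r19]) (simp_all add: col3 cls_def g_def tbl_def)
  have r51: "reach (Hc 0) {0,1} {5,11}" by (rule step_Hc[of 0 5 11 0 "{0,1}" "{0,11}" "{5,11}", OF _ r19]) (simp_all add: col3 cls_def g_def tbl_def)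
  have r52: "reach (Hc 0) {0,1} {3,12}" by (rule step_Hc[of 0 3 12 0 "{0,1}" "{0,12}" "{3,12}", OF _ r21]) (simp_all add: col3 cls_def g_def tbl_def)
  have r53: "reach (Hc 0) {0,1} {4,12}" by (rule step_Hc[of 0 4 12 0 "{0,1}" "{0,12}" "{4,12}", OF _ r21]) (simp_all add: col3 cls_def g_def tbl_def)
  have r54: "reach (Hc 0) {0,1} {5,12}" by (rule step_Hc[of 0 5 12 0 "{0,1}" "{0,12}" "{5,12}", OF _ r21]) (simp_all add: col3 cls_def g_def tbl_def)
  have r55: "reach (Hc 0) {0,1} {3,15}" by (rule step_Hc[of 3 9 15 0 "{0,1}" "{3,9}" "{3,15}", OF _ r24]) (simp_all add: col3 cls_def g_def tbl_def)
  have r56: "reach (Hc 0) {0,1} {9,15}" by (rule step_Hc[of 3 9 15 0 "{0,1}" "{3,9}" "{9,15}", OF _ r24]) (simp_all add: col3 cls_def g_def tbl_def)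
  have r57: "reach (Hc 0) {0,1} {3,16}" by (rule step_Hc[of 3 9 16 0 "{0,1}" "{3,9}" "{3,16}", OF _ r24]) (simp_all add: col3 cls_def g_def tbl_def)
  have r58: "reach (Hc 0) {0,1} {9,16}" by (rule step_Hc[of 3 9 16 0 "{0,1}" "{3,9}" "{9,16}", OF _ r24]) (simp_all add: col3 cls_def g_def tbl_def)
  have r59: "reach (Hc 0) {0,1} {4,15}" by (rule step_Hc[of 4 9 15 0 "{0,1}" "{4,9}" "{4,15}", OF _ r26]) (simp_all add: col3 cls_def g_def tbl_def)
  have r60: "reach (Hc 0) {0,1} {4,16}" by (rule step_Hc[of 4 9 16 0 "{0,1}" "{4,9}" "{4,16}", OF _ r26]) (simp_all add: col3 cls_def g_def tbl_def)
  have r61: "reach (Hc 0) {0,1} {5,15}" by (rule step_Hc[of 5 9 15 0 "{0,1}" "{5,9}" "{5,15}", OF _ r28]) (simp_all add: col3 cls_def g_def tbl_def)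
  have r62: "reach (Hc 0) {0,1} {5,16}" by (rule step_Hc[of 5 9 16 0 "{0,1}" "{5,9}" "{5,16}", OF _ r28]) (simp_all add: col3 cls_def g_def tbl_def)
  have r63: "reach (Hc 0) {0,1} {11,12}" by (rule step_Hc[of 9 11 12 0 "{0,1}" "{9,11}" "{11,12}", OF _ r30]) (simp_all add: col3 cls_def g_def tbl_def)
  have r64: "reach (Hc 0) {0,1} {1,3}" by (rule step_Hc[of 1 3 11 0 "{0,1}" "{1,11}" "{1,3}", OF _ r37]) (simp_all add: col3 cls_def g_def tbl_def)
  have r65: "reach (Hc 0) {0,1} {1,4}" by (rule step_Hc[of 1 4 11 0 "{0,1}" "{1,11}" "{1,4}", OF _ r37]) (simp_all add: col3 cls_def g_def tbl_def)
  have r66: "reach (Hc 0) {0,1} {1,5}" by (rule step_Hc[of 1 5 11 0 "{0,1}" "{1,11}" "{1,5}", OF _ r37]) (simp_all add: col3 cls_def g_def tbl_def)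
  have r67: "reach (Hc 0) {0,1} {10,15}" by (rule step_Hc[of 3 10 15 0 "{0,1}" "{3,10}" "{10,15}", OF _ r39]) (simp_all add: col3 cls_def g_def tbl_def)
  have r68: "reach (Hc 0) {0,1} {10,16}" by (rule step_Hc[of 3 10 16 0 "{0,1}" "{3,10}" "{10,16}", OF _ r39]) (simp_all add: col3 cls_def g_def tbl_def)
  have r69: "reach (Hc 0) {0,1} {2,3}" by (rule step_Hc[of 2 3 11 0 "{0,1}" "{2,11}" "{2,3}", OF _ r44]) (simp_all add: col3 cls_def g_def tbl_def)
  have r70: "reach (Hc 0) {0,1} {2,4}" by (rule step_Hc[of 2 4 11 0 "{0,1}" "{2,11}" "{2,4}", OF _ r44]) (simp_all add: col3 cls_def g_def tbl_def)
  have r71: "reach (Hc 0) {0,1} {2,5}" by (rule step_Hc[of 2 5 11 0 "{0,1}" "{2,11}" "{2,5}", OF _ r44]) (simp_all add: col3 cls_def g_def tbl_def)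
  have r72: "reach (Hc 0) {0,1} {3,4}" by (rule step_Hc[of 0 3 4 0 "{0,1}" "{0,3}" "{3,4}", OF _ r46]) (simp_all add: col3 cls_def g_def tbl_def)
  have r73: "reach (Hc 0) {0,1} {3,5}" by (rule step_Hc[of 0 3 5 0 "{0,1}" "{0,3}" "{3,5}", OF _ r46]) (simp_all add: col3 cls_def g_def tbl_def)
  have r74: "reach (Hc 0) {0,1} {4,5}" by (rule step_Hc[of 0 4 5 0 "{0,1}" "{0,4}" "{4,5}", OF _ r48]) (simp_all add: col3 cls_def g_def tbl_def)
  have r75: "reach (Hc 0) {0,1} {3,6}" by (rule step_Hc[of 3 6 15 0 "{0,1}" "{3,15}" "{3,6}", OF _ r55]) (simp_all add: col3 cls_def g_def tbl_def)
  have r76: "reach (Hc 0) {0,1} {6,15}" by (rule step_Hc[of 3 6 15 0 "{0,1}" "{3,15}" "{6,15}", OF _ r55]) (simp_all add: col3 cls_def g_def tbl_def)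
  have r77: "reach (Hc 0) {0,1} {3,7}" by (rule step_Hc[of 3 7 15 0 "{0,1}" "{3,15}" "{3,7}", OF _ r55]) (simp_all add: col3 cls_def g_def tbl_def)
  have r78: "reach (Hc 0) {0,1} {7,15}" by (rule step_Hc[of 3 7 15 0 "{0,1}" "{3,15}" "{7,15}", OF _ r55]) (simp_all add: col3 cls_def g_def tbl_def)
  have r79: "reach (Hc 0) {0,1} {3,8}" by (rule step_Hc[of 3 8 15 0 "{0,1}" "{3,15}" "{3,8}", OF _ r55]) (simp_all add: col3 cls_def g_def tbl_def)
  have r80: "reach (Hc 0) {0,1} {8,15}" by (rule step_Hc[of 3 8 15 0 "{0,1}" "{3,15}" "{8,15}", OF _ r55]) (simp_all add: col3 cls_def g_def tbl_def)
  have r81: "reach (Hc 0) {0,1} {9,10}" by (rule step_Hc[of 9 10 15 0 "{0,1}" "{9,15}" "{9,10}", OF _ r56]) (simp_all add: col3 cls_def g_def tbl_def)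
  have r82: "reach (Hc 0) {0,1} {6,16}" by (rule step_Hc[of 3 6 16 0 "{0,1}" "{3,16}" "{6,16}", OF _ r57]) (simp_all add: col3 cls_def g_def tbl_def)
  have r83: "reach (Hc 0) {0,1} {7,16}" by (rule step_Hc[of 3 7 16 0 "{0,1}" "{3,16}" "{7,16}", OF _ r57]) (simp_all add: col3 cls_def g_def tbl_def)
  have r84: "reach (Hc 0) {0,1} {8,16}" by (rule step_Hc[of 3 8 16 0 "{0,1}" "{3,16}" "{8,16}", OF _ r57]) (simp_all add: col3 cls_def g_def tbl_def)
  have r85: "reach (Hc 0) {0,1} {4,6}" by (rule step_Hc[of 4 6 15 0 "{0,1}" "{4,15}" "{4,6}", OF _ r59]) (simp_all add: col3 cls_def g_def tbl_def)
  have r86: "reach (Hc 0) {0,1} {4,7}" by (rule step_Hc[of 4 7 15 0 "{0,1}" "{4,15}" "{4,7}", OF _ r59]) (simp_all add: col3 cls_def g_def tbl_def)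
  have r87: "reach (Hc 0) {0,1} {4,8}" by (rule step_Hc[of 4 8 15 0 "{0,1}" "{4,15}" "{4,8}", OF _ r59]) (simp_all add: col3 cls_def g_def tbl_def)
  have r88: "reach (Hc 0) {0,1} {5,6}" by (rule step_Hc[of 5 6 15 0 "{0,1}" "{5,15}" "{5,6}", OF _ r61]) (simp_all add: col3 cls_def g_def tbl_def)
  have r89: "reach (Hc 0) {0,1} {5,7}" by (rule step_Hc[of 5 7 15 0 "{0,1}" "{5,15}" "{5,7}", OF _ r61]) (simp_all add: col3 cls_def g_def tbl_def)
  have r90: "reach (Hc 0) {0,1} {5,8}" by (rule step_Hc[of 5 8 15 0 "{0,1}" "{5,15}" "{5,8}", OF _ r61]) (simp_all add: col3 cls_def g_def tbl_def)
  have r91: "reach (Hc 0) {0,1} {6,7}" by (rule step_Hc[of 3 6 7 0 "{0,1}" "{3,6}" "{6,7}", OF _ r75]) (simp_all add: col3 cls_def g_def tbl_def)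
  have r92: "reach (Hc 0) {0,1} {6,8}" by (rule step_Hc[of 3 6 8 0 "{0,1}" "{3,6}" "{6,8}", OF _ r75]) (simp_all add: col3 cls_def g_def tbl_def)
  have r93: "reach (Hc 0) {0,1} {0,6}" by (rule step_Hc[of 0 6 15 0 "{0,1}" "{6,15}" "{0,6}", OF _ r76]) (simp_all add: col3 cls_def g_def tbl_def)
  have r94: "reach (Hc 0) {0,1} {0,15}" by (rule step_Hc[of 0 6 15 0 "{0,1}" "{6,15}" "{0,15}", OF _ r76]) (simp_all add: col3 cls_def g_def tbl_def)
  have r95: "reach (Hc 0) {0,1} {1,6}" by (rule step_Hc[of 1 6 15 0 "{0,1}" "{6,15}" "{1,6}", OF _ r76]) (simp_all add: col3 cls_def g_def tbl_def)
  have r96: "reach (Hc 0) {0,1} {1,15}" by (rule step_Hc[of 1 6 15 0 "{0,1}" "{6,15}" "{1,15}", OF _ r76]) (simp_all add: col3 cls_def g_def tbl_def)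
  have r97: "reach (Hc 0) {0,1} {2,6}" by (rule step_Hc[of 2 6 15 0 "{0,1}" "{6,15}" "{2,6}", OF _ r76]) (simp_all add: col3 cls_def g_def tbl_def)
  have r98: "reach (Hc 0) {0,1} {2,15}" by (rule step_Hc[of 2 6 15 0 "{0,1}" "{6,15}" "{2,15}", OF _ r76]) (simp_all add: col3 cls_def g_def tbl_def)
  have r99: "reach (Hc 0) {0,1} {6,11}" by (rule step_Hc[of 6 11 15 0 "{0,1}" "{6,15}" "{6,11}", OF _ r76]) (simp_all add: col3 cls_def g_def tbl_def)
  have r100: "reach (Hc 0) {0,1} {11,15}" by (rule step_Hc[of 6 11 15 0 "{0,1}" "{6,15}" "{11,15}", OF _ r76]) (simp_all add: col3 cls_def g_def tbl_def)
  have r101: "reach (Hc 0) {0,1} {6,12}" by (rule step_Hc[of 6 12 15 0 "{0,1}" "{6,15}" "{6,12}", OF _ r76]) (simp_all add: col3 cls_def g_def tbl_def)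
  have r102: "reach (Hc 0) {0,1} {12,15}" by (rule step_Hc[of 6 12 15 0 "{0,1}" "{6,15}" "{12,15}", OF _ r76]) (simp_all add: col3 cls_def g_def tbl_def)
  have r103: "reach (Hc 0) {0,1} {6,13}" by (rule step_Hc[of 6 13 15 0 "{0,1}" "{6,15}" "{6,13}", OF _ r76]) (simp_all add: col3 cls_def g_def tbl_def)
  have r104: "reach (Hc 0) {0,1} {13,15}" by (rule step_Hc[of 6 13 15 0 "{0,1}" "{6,15}" "{13,15}", OF _ r76]) (simp_all add: col3 cls_def g_def tbl_def)
  have r105: "reach (Hc 0) {0,1} {6,14}" by (rule step_Hc[of 6 14 15 0 "{0,1}" "{6,15}" "{6,14}", OF _ r76]) (simp_all add: col3 cls_def g_def tbl_def)
  have r106: "reach (Hc 0) {0,1} {14,15}" by (rule step_Hc[of 6 14 15 0 "{0,1}" "{6,15}" "{14,15}", OF _ r76]) (simp_all add: col3 cls_def g_def tbl_def)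
  have r107: "reach (Hc 0) {0,1} {7,8}" by (rule step_Hc[of 3 7 8 0 "{0,1}" "{3,7}" "{7,8}", OF _ r77]) (simp_all add: col3 cls_def g_def tbl_def)
  have r108: "reach (Hc 0) {0,1} {0,7}" by (rule step_Hc[of 0 7 15 0 "{0,1}" "{7,15}" "{0,7}", OF _ r78]) (simp_all add: col3 cls_def g_def tbl_def)
  have r109: "reach (Hc 0) {0,1} {1,7}" by (rule step_Hc[of 1 7 15 0 "{0,1}" "{7,15}" "{1,7}", OF _ r78]) (simp_all add: col3 cls_def g_def tbl_def)
  have r110: "reach (Hc 0) {0,1} {2,7}" by (rule step_Hc[of 2 7 15 0 "{0,1}" "{7,15}" "{2,7}", OF _ r78]) (simp_all add: col3 cls_def g_def tbl_def)
  have r111: "reach (Hc 0) {0,1} {7,11}" by (rule step_Hc[of 7 11 15 0 "{0,1}" "{7,15}" "{7,11}", OF _ r78]) (simp_all add: col3 cls_def g_def tbl_def)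
  have r112: "reach (Hc 0) {0,1} {7,12}" by (rule step_Hc[of 7 12 15 0 "{0,1}" "{7,15}" "{7,12}", OF _ r78]) (simp_all add: col3 cls_def g_def tbl_def)
  have r113: "reach (Hc 0) {0,1} {7,13}" by (rule step_Hc[of 7 13 15 0 "{0,1}" "{7,15}" "{7,13}", OF _ r78]) (simp_all add: col3 cls_def g_def tbl_def)
  have r114: "reach (Hc 0) {0,1} {7,14}" by (rule step_Hc[of 7 14 15 0 "{0,1}" "{7,15}" "{7,14}", OF _ r78]) (simp_all add: col3 cls_def g_def tbl_def)
  have r115: "reach (Hc 0) {0,1} {0,8}" by (rule step_Hc[of 0 8 15 0 "{0,1}" "{8,15}" "{0,8}", OF _ r80]) (simp_all add: col3 cls_def g_def tbl_def)
  have r116: "reach (Hc 0) {0,1} {1,8}" by (rule step_Hc[of 1 8 15 0 "{0,1}" "{8,15}" "{1,8}", OF _ r80]) (simp_all add: col3 cls_def g_def tbl_def)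
  have r117: "reach (Hc 0) {0,1} {2,8}" by (rule step_Hc[of 2 8 15 0 "{0,1}" "{8,15}" "{2,8}", OF _ r80]) (simp_all add: col3 cls_def g_def tbl_def)
  have r118: "reach (Hc 0) {0,1} {8,11}" by (rule step_Hc[of 8 11 15 0 "{0,1}" "{8,15}" "{8,11}", OF _ r80]) (simp_all add: col3 cls_def g_def tbl_def)
  have r119: "reach (Hc 0) {0,1} {8,12}" by (rule step_Hc[of 8 12 15 0 "{0,1}" "{8,15}" "{8,12}", OF _ r80]) (simp_all add: col3 cls_def g_def tbl_def)
  have r120: "reach (Hc 0) {0,1} {8,13}" by (rule step_Hc[of 8 13 15 0 "{0,1}" "{8,15}" "{8,13}", OF _ r80]) (simp_all add: col3 cls_def g_def tbl_def)
  have r121: "reach (Hc 0) {0,1} {8,14}" by (rule step_Hc[of 8 14 15 0 "{0,1}" "{8,15}" "{8,14}", OF _ r80]) (simp_all add: col3 cls_def g_def tbl_def)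
  have r122: "reach (Hc 0) {0,1} {6,9}" by (rule step_Hc[of 6 9 10 0 "{0,1}" "{9,10}" "{6,9}", OF _ r81]) (simp_all add: col3 cls_def g_def tbl_def)
  have r123: "reach (Hc 0) {0,1} {6,10}" by (rule step_Hc[of 6 9 10 0 "{0,1}" "{9,10}" "{6,10}", OF _ r81]) (simp_all add: col3 cls_def g_def tbl_def)
  have r124: "reach (Hc 0) {0,1} {7,9}" by (rule step_Hc[of 7 9 10 0 "{0,1}" "{9,10}" "{7,9}", OF _ r81]) (simp_all add: col3 cls_def g_def tbl_def)
  have r125: "reach (Hc 0) {0,1} {7,10}" by (rule step_Hc[of 7 9 10 0 "{0,1}" "{9,10}" "{7,10}", OF _ r81]) (simp_all add: col3 cls_def g_def tbl_def)
  have r126: "reach (Hc 0) {0,1} {8,9}" by (rule step_Hc[of 8 9 10 0 "{0,1}" "{9,10}" "{8,9}", OF _ r81]) (simp_all add: col3 cls_def g_def tbl_def)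
  have r127: "reach (Hc 0) {0,1} {8,10}" by (rule step_Hc[of 8 9 10 0 "{0,1}" "{9,10}" "{8,10}", OF _ r81]) (simp_all add: col3 cls_def g_def tbl_def)
  have r128: "reach (Hc 0) {0,1} {0,16}" by (rule step_Hc[of 0 6 16 0 "{0,1}" "{6,16}" "{0,16}", OF _ r82]) (simp_all add: col3 cls_def g_def tbl_def)
  have r129: "reach (Hc 0) {0,1} {1,16}" by (rule step_Hc[of 1 6 16 0 "{0,1}" "{6,16}" "{1,16}", OF _ r82]) (simp_all add: col3 cls_def g_def tbl_def)
  have r130: "reach (Hc 0) {0,1} {2,16}" by (rule step_Hc[of 2 6 16 0 "{0,1}" "{6,16}" "{2,16}", OF _ r82]) (simp_all add: col3 cls_def g_def tbl_def)
  have r131: "reach (Hc 0) {0,1} {11,16}" by (rule step_Hc[of 6 11 16 0 "{0,1}" "{6,16}" "{11,16}", OF _ r82]) (simp_all add: col3 cls_def g_def tbl_def)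
  have r132: "reach (Hc 0) {0,1} {12,16}" by (rule step_Hc[of 6 12 16 0 "{0,1}" "{6,16}" "{12,16}", OF _ r82]) (simp_all add: col3 cls_def g_def tbl_def)
  have r133: "reach (Hc 0) {0,1} {13,16}" by (rule step_Hc[of 6 13 16 0 "{0,1}" "{6,16}" "{13,16}", OF _ r82]) (simp_all add: col3 cls_def g_def tbl_def)
  have r134: "reach (Hc 0) {0,1} {14,16}" by (rule step_Hc[of 6 14 16 0 "{0,1}" "{6,16}" "{14,16}", OF _ r82]) (simp_all add: col3 cls_def g_def tbl_def)
  have r135: "reach (Hc 0) {0,1} {15,16}" by (rule step_Hc[of 13 15 16 0 "{0,1}" "{13,15}" "{15,16}", OF _ r104]) (simp_all add: col3 cls_def g_def tbl_def)
  have all: "\<forall>b<17. \<forall>a<b. reach (Hc 0) {0,1} {a,b}"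
    by (simp del: One_nat_def add: All_less_numeral All_less_one r0 r1 r2 r3 r4 r5 r6 r7 r8 r9 r10 r11 r12 r13 r14 r15 r16 r17 r18 r19 r20 r21 r22 r23 r24 r25 r26 r27 r28 r29 r30 r31 r32 r33 r34 r35 r36 r37 r38 r39 r40 r41 r42 r43 r44 r45 r46 r47 r48 r49 r50 r51 r52 r53 r54 r55 r56 r57 r58 r59 r60 r61 r62 r63 r64 r65 r66 r67 r68 r69 r70 r71 r72 r73 r74 r75 r76 r77 r78 r79 r80 r81 r82 r83 r84 r85 r86 r87 r88 r89 r90 r91 r92 r93 r94 r95 r96 r97 r98 r99 r100 r101 r102 r103 r104 r105 r106 r107 r108 r109 r110 r111 r112 r113 r114 r115 r116 r117 r118 r119 r120 r121 r122 r123 r124 r125 r126 r127 r128 r129 r130 r131 r132 r133 r134 r135)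
  show ?thesis by (rule hconn_from_base[OF Hc_card pair_cases[where R="reach (Hc 0) {0,1}", OF _ all] card01])
qed

lemma conn1: "hconnected {0..<17} (Hc 1)"
proof -
  have r0: "reach (Hc 1) {0,1} {0,1}" by (rule edge_Hc[of 0 1 13 1 "{0,1}" "{0,1}"]) (simp_all add: col3 cls_def g_def tbl_def)
  have r1: "reach (Hc 1) {0,1} {0,13}" by (rule step_Hc[of 0 1 13 1 "{0,1}" "{0,1}" "{0,13}", OF _ r0]) (simp_all add: col3 cls_def g_def tbl_def)
  have r2: "reach (Hc 1) {0,1} {1,13}" by (rule step_Hc[of 0 1 13 1 "{0,1}" "{0,1}" "{1,13}", OF _ r0]) (simp_all add: col3 cls_def g_def tbl_def)
  have r3: "reach (Hc 1) {0,1} {0,14}" by (rule step_Hc[of 0 1 14 1 "{0,1}" "{0,1}" "{0,14}", OF _ r0]) (simp_all add: col3 cls_def g_def tbl_def)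
  have r4: "reach (Hc 1) {0,1} {1,14}" by (rule step_Hc[of 0 1 14 1 "{0,1}" "{0,1}" "{1,14}", OF _ r0]) (simp_all add: col3 cls_def g_def tbl_def)
  have r5: "reach (Hc 1) {0,1} {0,2}" by (rule step_Hc[of 0 2 13 1 "{0,1}" "{0,13}" "{0,2}", OF _ r1]) (simp_all add: col3 cls_def g_def tbl_def)
  have r6: "reach (Hc 1) {0,1} {2,13}" by (rule step_Hc[of 0 2 13 1 "{0,1}" "{0,13}" "{2,13}", OF _ r1]) (simp_all add: col3 cls_def g_def tbl_def)
  have r7: "reach (Hc 1) {0,1} {0,3}" by (rule step_Hc[of 0 3 13 1 "{0,1}" "{0,13}" "{0,3}", OF _ r1]) (simp_all add: col3 cls_def g_def tbl_def)
  have r8: "reach (Hc 1) {0,1} {3,13}" by (rule step_Hc[of 0 3 13 1 "{0,1}" "{0,13}" "{3,13}", OF _ r1]) (simp_all add: col3 cls_def g_def tbl_def)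
  have r9: "reach (Hc 1) {0,1} {0,4}" by (rule step_Hc[of 0 4 13 1 "{0,1}" "{0,13}" "{0,4}", OF _ r1]) (simp_all add: col3 cls_def g_def tbl_def)
  have r10: "reach (Hc 1) {0,1} {4,13}" by (rule step_Hc[of 0 4 13 1 "{0,1}" "{0,13}" "{4,13}", OF _ r1]) (simp_all add: col3 cls_def g_def tbl_def)
  have r11: "reach (Hc 1) {0,1} {0,5}" by (rule step_Hc[of 0 5 13 1 "{0,1}" "{0,13}" "{0,5}", OF _ r1]) (simp_all add: col3 cls_def g_def tbl_def)
  have r12: "reach (Hc 1) {0,1} {5,13}" by (rule step_Hc[of 0 5 13 1 "{0,1}" "{0,13}" "{5,13}", OF _ r1]) (simp_all add: col3 cls_def g_def tbl_def)
  have r13: "reach (Hc 1) {0,1} {1,2}" by (rule step_Hc[of 1 2 13 1 "{0,1}" "{1,13}" "{1,2}", OF _ r2]) (simp_all add: col3 cls_def g_def tbl_def)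
  have r14: "reach (Hc 1) {0,1} {1,3}" by (rule step_Hc[of 1 3 13 1 "{0,1}" "{1,13}" "{1,3}", OF _ r2]) (simp_all add: col3 cls_def g_def tbl_def)
  have r15: "reach (Hc 1) {0,1} {1,4}" by (rule step_Hc[of 1 4 13 1 "{0,1}" "{1,13}" "{1,4}", OF _ r2]) (simp_all add: col3 cls_def g_def tbl_def)
  have r16: "reach (Hc 1) {0,1} {1,5}" by (rule step_Hc[of 1 5 13 1 "{0,1}" "{1,13}" "{1,5}", OF _ r2]) (simp_all add: col3 cls_def g_def tbl_def)
  have r17: "reach (Hc 1) {0,1} {2,14}" by (rule step_Hc[of 0 2 14 1 "{0,1}" "{0,14}" "{2,14}", OF _ r3]) (simp_all add: col3 cls_def g_def tbl_def)
  have r18: "reach (Hc 1) {0,1} {3,14}" by (rule step_Hc[of 0 3 14 1 "{0,1}" "{0,14}" "{3,14}", OF _ r3]) (simp_all add: col3 cls_def g_def tbl_def)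
  have r19: "reach (Hc 1) {0,1} {4,14}" by (rule step_Hc[of 0 4 14 1 "{0,1}" "{0,14}" "{4,14}", OF _ r3]) (simp_all add: col3 cls_def g_def tbl_def)
  have r20: "reach (Hc 1) {0,1} {5,14}" by (rule step_Hc[of 0 5 14 1 "{0,1}" "{0,14}" "{5,14}", OF _ r3]) (simp_all add: col3 cls_def g_def tbl_def)
  have r21: "reach (Hc 1) {0,1} {2,3}" by (rule step_Hc[of 2 3 13 1 "{0,1}" "{2,13}" "{2,3}", OF _ r6]) (simp_all add: col3 cls_def g_def tbl_def)
  have r22: "reach (Hc 1) {0,1} {2,4}" by (rule step_Hc[of 2 4 13 1 "{0,1}" "{2,13}" "{2,4}", OF _ r6]) (simp_all add: col3 cls_def g_def tbl_def)
  have r23: "reach (Hc 1) {0,1} {2,5}" by (rule step_Hc[of 2 5 13 1 "{0,1}" "{2,13}" "{2,5}", OF _ r6]) (simp_all add: col3 cls_def g_def tbl_def)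
  have r24: "reach (Hc 1) {0,1} {0,15}" by (rule step_Hc[of 0 3 15 1 "{0,1}" "{0,3}" "{0,15}", OF _ r7]) (simp_all add: col3 cls_def g_def tbl_def)
  have r25: "reach (Hc 1) {0,1} {3,15}" by (rule step_Hc[of 0 3 15 1 "{0,1}" "{0,3}" "{3,15}", OF _ r7]) (simp_all add: col3 cls_def g_def tbl_def)
  have r26: "reach (Hc 1) {0,1} {0,16}" by (rule step_Hc[of 0 3 16 1 "{0,1}" "{0,3}" "{0,16}", OF _ r7]) (simp_all add: col3 cls_def g_def tbl_def)
  have r27: "reach (Hc 1) {0,1} {3,16}" by (rule step_Hc[of 0 3 16 1 "{0,1}" "{0,3}" "{3,16}", OF _ r7]) (simp_all add: col3 cls_def g_def tbl_def)
  have r28: "reach (Hc 1) {0,1} {4,15}" by (rule step_Hc[of 0 4 15 1 "{0,1}" "{0,4}" "{4,15}", OF _ r9]) (simp_all add: col3 cls_def g_def tbl_def)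
  have r29: "reach (Hc 1) {0,1} {4,16}" by (rule step_Hc[of 0 4 16 1 "{0,1}" "{0,4}" "{4,16}", OF _ r9]) (simp_all add: col3 cls_def g_def tbl_def)
  have r30: "reach (Hc 1) {0,1} {5,15}" by (rule step_Hc[of 0 5 15 1 "{0,1}" "{0,5}" "{5,15}", OF _ r11]) (simp_all add: col3 cls_def g_def tbl_def)
  have r31: "reach (Hc 1) {0,1} {5,16}" by (rule step_Hc[of 0 5 16 1 "{0,1}" "{0,5}" "{5,16}", OF _ r11]) (simp_all add: col3 cls_def g_def tbl_def)
  have r32: "reach (Hc 1) {0,1} {1,15}" by (rule step_Hc[of 1 3 15 1 "{0,1}" "{1,3}" "{1,15}", OF _ r14]) (simp_all add: col3 cls_def g_def tbl_def)
  have r33: "reach (Hc 1) {0,1} {1,16}" by (rule step_Hc[of 1 3 16 1 "{0,1}" "{1,3}" "{1,16}", OF _ r14]) (simp_all add: col3 cls_def g_def tbl_def)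
  have r34: "reach (Hc 1) {0,1} {2,15}" by (rule step_Hc[of 2 3 15 1 "{0,1}" "{2,3}" "{2,15}", OF _ r21]) (simp_all add: col3 cls_def g_def tbl_def)
  have r35: "reach (Hc 1) {0,1} {2,16}" by (rule step_Hc[of 2 3 16 1 "{0,1}" "{2,3}" "{2,16}", OF _ r21]) (simp_all add: col3 cls_def g_def tbl_def)
  have r36: "reach (Hc 1) {0,1} {0,9}" by (rule step_Hc[of 0 9 15 1 "{0,1}" "{0,15}" "{0,9}", OF _ r24]) (simp_all add: col3 cls_def g_def tbl_def)
  have r37: "reach (Hc 1) {0,1} {9,15}" by (rule step_Hc[of 0 9 15 1 "{0,1}" "{0,15}" "{9,15}", OF _ r24]) (simp_all add: col3 cls_def g_def tbl_def)
  have r38: "reach (Hc 1) {0,1} {0,10}" by (rule step_Hc[of 0 10 15 1 "{0,1}" "{0,15}" "{0,10}", OF _ r24]) (simp_all add: col3 cls_def g_def tbl_def)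
  have r39: "reach (Hc 1) {0,1} {10,15}" by (rule step_Hc[of 0 10 15 1 "{0,1}" "{0,15}" "{10,15}", OF _ r24]) (simp_all add: col3 cls_def g_def tbl_def)
  have r40: "reach (Hc 1) {0,1} {15,16}" by (rule step_Hc[of 3 15 16 1 "{0,1}" "{3,15}" "{15,16}", OF _ r25]) (simp_all add: col3 cls_def g_def tbl_def)
  have r41: "reach (Hc 1) {0,1} {9,16}" by (rule step_Hc[of 0 9 16 1 "{0,1}" "{0,16}" "{9,16}", OF _ r26]) (simp_all add: col3 cls_def g_def tbl_def)
  have r42: "reach (Hc 1) {0,1} {10,16}" by (rule step_Hc[of 0 10 16 1 "{0,1}" "{0,16}" "{10,16}", OF _ r26]) (simp_all add: col3 cls_def g_def tbl_def)
  have r43: "reach (Hc 1) {0,1} {1,9}" by (rule step_Hc[of 1 9 15 1 "{0,1}" "{1,15}" "{1,9}", OF _ r32]) (simp_all add: col3 cls_def g_def tbl_def)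
  have r44: "reach (Hc 1) {0,1} {1,10}" by (rule step_Hc[of 1 10 15 1 "{0,1}" "{1,15}" "{1,10}", OF _ r32]) (simp_all add: col3 cls_def g_def tbl_def)
  have r45: "reach (Hc 1) {0,1} {2,9}" by (rule step_Hc[of 2 9 15 1 "{0,1}" "{2,15}" "{2,9}", OF _ r34]) (simp_all add: col3 cls_def g_def tbl_def)
  have r46: "reach (Hc 1) {0,1} {2,10}" by (rule step_Hc[of 2 10 15 1 "{0,1}" "{2,15}" "{2,10}", OF _ r34]) (simp_all add: col3 cls_def g_def tbl_def)
  have r47: "reach (Hc 1) {0,1} {0,6}" by (rule step_Hc[of 0 6 9 1 "{0,1}" "{0,9}" "{0,6}", OF _ r36]) (simp_all add: col3 cls_def g_def tbl_def)
  have r48: "reach (Hc 1) {0,1} {6,9}" by (rule step_Hc[of 0 6 9 1 "{0,1}" "{0,9}" "{6,9}", OF _ r36]) (simp_all add: col3 cls_def g_def tbl_def)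
  have r49: "reach (Hc 1) {0,1} {0,7}" by (rule step_Hc[of 0 7 9 1 "{0,1}" "{0,9}" "{0,7}", OF _ r36]) (simp_all add: col3 cls_def g_def tbl_def)
  have r50: "reach (Hc 1) {0,1} {7,9}" by (rule step_Hc[of 0 7 9 1 "{0,1}" "{0,9}" "{7,9}", OF _ r36]) (simp_all add: col3 cls_def g_def tbl_def)
  have r51: "reach (Hc 1) {0,1} {0,8}" by (rule step_Hc[of 0 8 9 1 "{0,1}" "{0,9}" "{0,8}", OF _ r36]) (simp_all add: col3 cls_def g_def tbl_def)
  have r52: "reach (Hc 1) {0,1} {8,9}" by (rule step_Hc[of 0 8 9 1 "{0,1}" "{0,9}" "{8,9}", OF _ r36]) (simp_all add: col3 cls_def g_def tbl_def)
  have r53: "reach (Hc 1) {0,1} {6,10}" by (rule step_Hc[of 0 6 10 1 "{0,1}" "{0,10}" "{6,10}", OF _ r38]) (simp_all add: col3 cls_def g_def tbl_def)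
  have r54: "reach (Hc 1) {0,1} {7,10}" by (rule step_Hc[of 0 7 10 1 "{0,1}" "{0,10}" "{7,10}", OF _ r38]) (simp_all add: col3 cls_def g_def tbl_def)
  have r55: "reach (Hc 1) {0,1} {8,10}" by (rule step_Hc[of 0 8 10 1 "{0,1}" "{0,10}" "{8,10}", OF _ r38]) (simp_all add: col3 cls_def g_def tbl_def)
  have r56: "reach (Hc 1) {0,1} {6,15}" by (rule step_Hc[of 6 15 16 1 "{0,1}" "{15,16}" "{6,15}", OF _ r40]) (simp_all add: col3 cls_def g_def tbl_def)
  have r57: "reach (Hc 1) {0,1} {6,16}" by (rule step_Hc[of 6 15 16 1 "{0,1}" "{15,16}" "{6,16}", OF _ r40]) (simp_all add: col3 cls_def g_def tbl_def)
  have r58: "reach (Hc 1) {0,1} {7,15}" by (rule step_Hc[of 7 15 16 1 "{0,1}" "{15,16}" "{7,15}", OF _ r40]) (simp_all add: col3 cls_def g_def tbl_def)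
  have r59: "reach (Hc 1) {0,1} {7,16}" by (rule step_Hc[of 7 15 16 1 "{0,1}" "{15,16}" "{7,16}", OF _ r40]) (simp_all add: col3 cls_def g_def tbl_def)
  have r60: "reach (Hc 1) {0,1} {8,15}" by (rule step_Hc[of 8 15 16 1 "{0,1}" "{15,16}" "{8,15}", OF _ r40]) (simp_all add: col3 cls_def g_def tbl_def)
  have r61: "reach (Hc 1) {0,1} {8,16}" by (rule step_Hc[of 8 15 16 1 "{0,1}" "{15,16}" "{8,16}", OF _ r40]) (simp_all add: col3 cls_def g_def tbl_def)
  have r62: "reach (Hc 1) {0,1} {1,6}" by (rule step_Hc[of 1 6 9 1 "{0,1}" "{1,9}" "{1,6}", OF _ r43]) (simp_all add: col3 cls_def g_def tbl_def)
  have r63: "reach (Hc 1) {0,1} {1,7}" by (rule step_Hc[of 1 7 9 1 "{0,1}" "{1,9}" "{1,7}", OF _ r43]) (simp_all add: col3 cls_def g_def tbl_def)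
  have r64: "reach (Hc 1) {0,1} {1,8}" by (rule step_Hc[of 1 8 9 1 "{0,1}" "{1,9}" "{1,8}", OF _ r43]) (simp_all add: col3 cls_def g_def tbl_def)
  have r65: "reach (Hc 1) {0,1} {2,6}" by (rule step_Hc[of 2 6 9 1 "{0,1}" "{2,9}" "{2,6}", OF _ r45]) (simp_all add: col3 cls_def g_def tbl_def)
  have r66: "reach (Hc 1) {0,1} {2,7}" by (rule step_Hc[of 2 7 9 1 "{0,1}" "{2,9}" "{2,7}", OF _ r45]) (simp_all add: col3 cls_def g_def tbl_def)
  have r67: "reach (Hc 1) {0,1} {2,8}" by (rule step_Hc[of 2 8 9 1 "{0,1}" "{2,9}" "{2,8}", OF _ r45]) (simp_all add: col3 cls_def g_def tbl_def)
  have r68: "reach (Hc 1) {0,1} {0,11}" by (rule step_Hc[of 0 6 11 1 "{0,1}" "{0,6}" "{0,11}", OF _ r47]) (simp_all add: col3 cls_def g_def tbl_def)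
  have r69: "reach (Hc 1) {0,1} {6,11}" by (rule step_Hc[of 0 6 11 1 "{0,1}" "{0,6}" "{6,11}", OF _ r47]) (simp_all add: col3 cls_def g_def tbl_def)
  have r70: "reach (Hc 1) {0,1} {0,12}" by (rule step_Hc[of 0 6 12 1 "{0,1}" "{0,6}" "{0,12}", OF _ r47]) (simp_all add: col3 cls_def g_def tbl_def)
  have r71: "reach (Hc 1) {0,1} {6,12}" by (rule step_Hc[of 0 6 12 1 "{0,1}" "{0,6}" "{6,12}", OF _ r47]) (simp_all add: col3 cls_def g_def tbl_def)
  have r72: "reach (Hc 1) {0,1} {3,6}" by (rule step_Hc[of 3 6 9 1 "{0,1}" "{6,9}" "{3,6}", OF _ r48]) (simp_all add: col3 cls_def g_def tbl_def)
  have r73: "reach (Hc 1) {0,1} {3,9}" by (rule step_Hc[of 3 6 9 1 "{0,1}" "{6,9}" "{3,9}", OF _ r48]) (simp_all add: col3 cls_def g_def tbl_def)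
  have r74: "reach (Hc 1) {0,1} {4,6}" by (rule step_Hc[of 4 6 9 1 "{0,1}" "{6,9}" "{4,6}", OF _ r48]) (simp_all add: col3 cls_def g_def tbl_def)
  have r75: "reach (Hc 1) {0,1} {4,9}" by (rule step_Hc[of 4 6 9 1 "{0,1}" "{6,9}" "{4,9}", OF _ r48]) (simp_all add: col3 cls_def g_def tbl_def)
  have r76: "reach (Hc 1) {0,1} {5,6}" by (rule step_Hc[of 5 6 9 1 "{0,1}" "{6,9}" "{5,6}", OF _ r48]) (simp_all add: col3 cls_def g_def tbl_def)
  have r77: "reach (Hc 1) {0,1} {5,9}" by (rule step_Hc[of 5 6 9 1 "{0,1}" "{6,9}" "{5,9}", OF _ r48]) (simp_all add: col3 cls_def g_def tbl_def)
  have r78: "reach (Hc 1) {0,1} {6,13}" by (rule step_Hc[of 6 9 13 1 "{0,1}" "{6,9}" "{6,13}", OF _ r48]) (simp_all add: col3 cls_def g_def tbl_def)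
  have r79: "reach (Hc 1) {0,1} {9,13}" by (rule step_Hc[of 6 9 13 1 "{0,1}" "{6,9}" "{9,13}", OF _ r48]) (simp_all add: col3 cls_def g_def tbl_def)
  have r80: "reach (Hc 1) {0,1} {6,14}" by (rule step_Hc[of 6 9 14 1 "{0,1}" "{6,9}" "{6,14}", OF _ r48]) (simp_all add: col3 cls_def g_def tbl_def)
  have r81: "reach (Hc 1) {0,1} {9,14}" by (rule step_Hc[of 6 9 14 1 "{0,1}" "{6,9}" "{9,14}", OF _ r48]) (simp_all add: col3 cls_def g_def tbl_def)
  have r82: "reach (Hc 1) {0,1} {7,11}" by (rule step_Hc[of 0 7 11 1 "{0,1}" "{0,7}" "{7,11}", OF _ r49]) (simp_all add: col3 cls_def g_def tbl_def)
  have r83: "reach (Hc 1) {0,1} {7,12}" by (rule step_Hc[of 0 7 12 1 "{0,1}" "{0,7}" "{7,12}", OF _ r49]) (simp_all add: col3 cls_def g_def tbl_def)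
  have r84: "reach (Hc 1) {0,1} {3,7}" by (rule step_Hc[of 3 7 9 1 "{0,1}" "{7,9}" "{3,7}", OF _ r50]) (simp_all add: col3 cls_def g_def tbl_def)
  have r85: "reach (Hc 1) {0,1} {4,7}" by (rule step_Hc[of 4 7 9 1 "{0,1}" "{7,9}" "{4,7}", OF _ r50]) (simp_all add: col3 cls_def g_def tbl_def)
  have r86: "reach (Hc 1) {0,1} {5,7}" by (rule step_Hc[of 5 7 9 1 "{0,1}" "{7,9}" "{5,7}", OF _ r50]) (simp_all add: col3 cls_def g_def tbl_def)
  have r87: "reach (Hc 1) {0,1} {7,13}" by (rule step_Hc[of 7 9 13 1 "{0,1}" "{7,9}" "{7,13}", OF _ r50]) (simp_all add: col3 cls_def g_def tbl_def)
  have r88: "reach (Hc 1) {0,1} {7,14}" by (rule step_Hc[of 7 9 14 1 "{0,1}" "{7,9}" "{7,14}", OF _ r50]) (simp_all add: col3 cls_def g_def tbl_def)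
  have r89: "reach (Hc 1) {0,1} {8,11}" by (rule step_Hc[of 0 8 11 1 "{0,1}" "{0,8}" "{8,11}", OF _ r51]) (simp_all add: col3 cls_def g_def tbl_def)
  have r90: "reach (Hc 1) {0,1} {8,12}" by (rule step_Hc[of 0 8 12 1 "{0,1}" "{0,8}" "{8,12}", OF _ r51]) (simp_all add: col3 cls_def g_def tbl_def)
  have r91: "reach (Hc 1) {0,1} {3,8}" by (rule step_Hc[of 3 8 9 1 "{0,1}" "{8,9}" "{3,8}", OF _ r52]) (simp_all add: col3 cls_def g_def tbl_def)
  have r92: "reach (Hc 1) {0,1} {4,8}" by (rule step_Hc[of 4 8 9 1 "{0,1}" "{8,9}" "{4,8}", OF _ r52]) (simp_all add: col3 cls_def g_def tbl_def)
  have r93: "reach (Hc 1) {0,1} {5,8}" by (rule step_Hc[of 5 8 9 1 "{0,1}" "{8,9}" "{5,8}", OF _ r52]) (simp_all add: col3 cls_def g_def tbl_def)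
  have r94: "reach (Hc 1) {0,1} {8,13}" by (rule step_Hc[of 8 9 13 1 "{0,1}" "{8,9}" "{8,13}", OF _ r52]) (simp_all add: col3 cls_def g_def tbl_def)
  have r95: "reach (Hc 1) {0,1} {8,14}" by (rule step_Hc[of 8 9 14 1 "{0,1}" "{8,9}" "{8,14}", OF _ r52]) (simp_all add: col3 cls_def g_def tbl_def)
  have r96: "reach (Hc 1) {0,1} {3,10}" by (rule step_Hc[of 3 6 10 1 "{0,1}" "{6,10}" "{3,10}", OF _ r53]) (simp_all add: col3 cls_def g_def tbl_def)
  have r97: "reach (Hc 1) {0,1} {4,10}" by (rule step_Hc[of 4 6 10 1 "{0,1}" "{6,10}" "{4,10}", OF _ r53]) (simp_all add: col3 cls_def g_def tbl_def)
  have r98: "reach (Hc 1) {0,1} {5,10}" by (rule step_Hc[of 5 6 10 1 "{0,1}" "{6,10}" "{5,10}", OF _ r53]) (simp_all add: col3 cls_def g_def tbl_def)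
  have r99: "reach (Hc 1) {0,1} {10,13}" by (rule step_Hc[of 6 10 13 1 "{0,1}" "{6,10}" "{10,13}", OF _ r53]) (simp_all add: col3 cls_def g_def tbl_def)
  have r100: "reach (Hc 1) {0,1} {10,14}" by (rule step_Hc[of 6 10 14 1 "{0,1}" "{6,10}" "{10,14}", OF _ r53]) (simp_all add: col3 cls_def g_def tbl_def)
  have r101: "reach (Hc 1) {0,1} {1,11}" by (rule step_Hc[of 1 6 11 1 "{0,1}" "{1,6}" "{1,11}", OF _ r62]) (simp_all add: col3 cls_def g_def tbl_def)
  have r102: "reach (Hc 1) {0,1} {1,12}" by (rule step_Hc[of 1 6 12 1 "{0,1}" "{1,6}" "{1,12}", OF _ r62]) (simp_all add: col3 cls_def g_def tbl_def)
  have r103: "reach (Hc 1) {0,1} {2,11}" by (rule step_Hc[of 2 6 11 1 "{0,1}" "{2,6}" "{2,11}", OF _ r65]) (simp_all add: col3 cls_def g_def tbl_def)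
  have r104: "reach (Hc 1) {0,1} {2,12}" by (rule step_Hc[of 2 6 12 1 "{0,1}" "{2,6}" "{2,12}", OF _ r65]) (simp_all add: col3 cls_def g_def tbl_def)
  have r105: "reach (Hc 1) {0,1} {6,7}" by (rule step_Hc[of 6 7 11 1 "{0,1}" "{6,11}" "{6,7}", OF _ r69]) (simp_all add: col3 cls_def g_def tbl_def)
  have r106: "reach (Hc 1) {0,1} {6,8}" by (rule step_Hc[of 6 8 11 1 "{0,1}" "{6,11}" "{6,8}", OF _ r69]) (simp_all add: col3 cls_def g_def tbl_def)
  have r107: "reach (Hc 1) {0,1} {11,13}" by (rule step_Hc[of 6 11 13 1 "{0,1}" "{6,11}" "{11,13}", OF _ r69]) (simp_all add: col3 cls_def g_def tbl_def)
  have r108: "reach (Hc 1) {0,1} {11,14}" by (rule step_Hc[of 6 11 14 1 "{0,1}" "{6,11}" "{11,14}", OF _ r69]) (simp_all add: col3 cls_def g_def tbl_def)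
  have r109: "reach (Hc 1) {0,1} {12,13}" by (rule step_Hc[of 6 12 13 1 "{0,1}" "{6,12}" "{12,13}", OF _ r71]) (simp_all add: col3 cls_def g_def tbl_def)
  have r110: "reach (Hc 1) {0,1} {12,14}" by (rule step_Hc[of 6 12 14 1 "{0,1}" "{6,12}" "{12,14}", OF _ r71]) (simp_all add: col3 cls_def g_def tbl_def)
  have r111: "reach (Hc 1) {0,1} {9,10}" by (rule step_Hc[of 3 9 10 1 "{0,1}" "{3,9}" "{9,10}", OF _ r73]) (simp_all add: col3 cls_def g_def tbl_def)
  have r112: "reach (Hc 1) {0,1} {3,11}" by (rule step_Hc[of 3 9 11 1 "{0,1}" "{3,9}" "{3,11}", OF _ r73]) (simp_all add: col3 cls_def g_def tbl_def)
  have r113: "reach (Hc 1) {0,1} {9,11}" by (rule step_Hc[of 3 9 11 1 "{0,1}" "{3,9}" "{9,11}", OF _ r73]) (simp_all add: col3 cls_def g_def tbl_def)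
  have r114: "reach (Hc 1) {0,1} {3,12}" by (rule step_Hc[of 3 9 12 1 "{0,1}" "{3,9}" "{3,12}", OF _ r73]) (simp_all add: col3 cls_def g_def tbl_def)
  have r115: "reach (Hc 1) {0,1} {9,12}" by (rule step_Hc[of 3 9 12 1 "{0,1}" "{3,9}" "{9,12}", OF _ r73]) (simp_all add: col3 cls_def g_def tbl_def)
  have r116: "reach (Hc 1) {0,1} {4,11}" by (rule step_Hc[of 4 9 11 1 "{0,1}" "{4,9}" "{4,11}", OF _ r75]) (simp_all add: col3 cls_def g_def tbl_def)
  have r117: "reach (Hc 1) {0,1} {4,12}" by (rule step_Hc[of 4 9 12 1 "{0,1}" "{4,9}" "{4,12}", OF _ r75]) (simp_all add: col3 cls_def g_def tbl_def)
  have r118: "reach (Hc 1) {0,1} {5,11}" by (rule step_Hc[of 5 9 11 1 "{0,1}" "{5,9}" "{5,11}", OF _ r77]) (simp_all add: col3 cls_def g_def tbl_def)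
  have r119: "reach (Hc 1) {0,1} {5,12}" by (rule step_Hc[of 5 9 12 1 "{0,1}" "{5,9}" "{5,12}", OF _ r77]) (simp_all add: col3 cls_def g_def tbl_def)
  have r120: "reach (Hc 1) {0,1} {7,8}" by (rule step_Hc[of 7 8 11 1 "{0,1}" "{7,11}" "{7,8}", OF _ r82]) (simp_all add: col3 cls_def g_def tbl_def)
  have r121: "reach (Hc 1) {0,1} {10,11}" by (rule step_Hc[of 3 10 11 1 "{0,1}" "{3,10}" "{10,11}", OF _ r96]) (simp_all add: col3 cls_def g_def tbl_def)
  have r122: "reach (Hc 1) {0,1} {10,12}" by (rule step_Hc[of 3 10 12 1 "{0,1}" "{3,10}" "{10,12}", OF _ r96]) (simp_all add: col3 cls_def g_def tbl_def)
  have r123: "reach (Hc 1) {0,1} {11,12}" by (rule step_Hc[of 11 12 13 1 "{0,1}" "{11,13}" "{11,12}", OF _ r107]) (simp_all add: col3 cls_def g_def tbl_def)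
  have r124: "reach (Hc 1) {0,1} {11,15}" by (rule step_Hc[of 11 13 15 1 "{0,1}" "{11,13}" "{11,15}", OF _ r107]) (simp_all add: col3 cls_def g_def tbl_def)
  have r125: "reach (Hc 1) {0,1} {13,15}" by (rule step_Hc[of 11 13 15 1 "{0,1}" "{11,13}" "{13,15}", OF _ r107]) (simp_all add: col3 cls_def g_def tbl_def)
  have r126: "reach (Hc 1) {0,1} {11,16}" by (rule step_Hc[of 11 13 16 1 "{0,1}" "{11,13}" "{11,16}", OF _ r107]) (simp_all add: col3 cls_def g_def tbl_def)
  have r127: "reach (Hc 1) {0,1} {13,16}" by (rule step_Hc[of 11 13 16 1 "{0,1}" "{11,13}" "{13,16}", OF _ r107]) (simp_all add: col3 cls_def g_def tbl_def)
  have r128: "reach (Hc 1) {0,1} {14,15}" by (rule step_Hc[of 11 14 15 1 "{0,1}" "{11,14}" "{14,15}", OF _ r108]) (simp_all add: col3 cls_def g_def tbl_def)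
  have r129: "reach (Hc 1) {0,1} {14,16}" by (rule step_Hc[of 11 14 16 1 "{0,1}" "{11,14}" "{14,16}", OF _ r108]) (simp_all add: col3 cls_def g_def tbl_def)
  have r130: "reach (Hc 1) {0,1} {12,15}" by (rule step_Hc[of 12 13 15 1 "{0,1}" "{12,13}" "{12,15}", OF _ r109]) (simp_all add: col3 cls_def g_def tbl_def)
  have r131: "reach (Hc 1) {0,1} {12,16}" by (rule step_Hc[of 12 13 16 1 "{0,1}" "{12,13}" "{12,16}", OF _ r109]) (simp_all add: col3 cls_def g_def tbl_def)
  have r132: "reach (Hc 1) {0,1} {3,4}" by (rule step_Hc[of 3 4 11 1 "{0,1}" "{3,11}" "{3,4}", OF _ r112]) (simp_all add: col3 cls_def g_def tbl_def)
  have r133: "reach (Hc 1) {0,1} {3,5}" by (rule step_Hc[of 3 5 11 1 "{0,1}" "{3,11}" "{3,5}", OF _ r112]) (simp_all add: col3 cls_def g_def tbl_def)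
  have r134: "reach (Hc 1) {0,1} {4,5}" by (rule step_Hc[of 4 5 11 1 "{0,1}" "{4,11}" "{4,5}", OF _ r116]) (simp_all add: col3 cls_def g_def tbl_def)
  have r135: "reach (Hc 1) {0,1} {13,14}" by (rule step_Hc[of 13 14 15 1 "{0,1}" "{13,15}" "{13,14}", OF _ r125]) (simp_all add: col3 cls_def g_def tbl_def)
  have all: "\<forall>b<17. \<forall>a<b. reach (Hc 1) {0,1} {a,b}"
    by (simp del: One_nat_def add: All_less_numeral All_less_one r0 r1 r2 r3 r4 r5 r6 r7 r8 r9 r10 r11 r12 r13 r14 r15 r16 r17 r18 r19 r20 r21 r22 r23 r24 r25 r26 r27 r28 r29 r30 r31 r32 r33 r34 r35 r36 r37 r38 r39 r40 r41 r42 r43 r44 r45 r46 r47 r48 r49 r50 r51 r52 r53 r54 r55 r56 r57 r58 r59 r60 r61 r62 r63 r64 r65 r66 r67 r68 r69 r70 r71 r72 r73 r74 r75 r76 r77 r78 r79 r80 r81 r82 r83 r84 r85 r86 r87 r88 r89 r90 r91 r92 r93 r94 r95 r96 r97 r98 r99 r100 r101 r102 r103 r104 r105 r106 r107 r108 r109 r110 r111 r112 r113 r114 r115 r116 r117 r118 r119 r120 r121 r122 r123 r124 r125 r126 r127 r128 r129 r130 r131 r132 r133 r134 r135)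
  show ?thesis by (rule hconn_from_base[OF Hc_card pair_cases[where R="reach (Hc 1) {0,1}", OF _ all] card01])
qed

lemma conn2: "hconnected {0..<17} (Hc 2)"
proof -
  have r0: "reach (Hc 2) {0,1} {0,1}" by (rule edge_Hc[of 0 1 3 2 "{0,1}" "{0,1}"]) (simp_all add: col3 cls_def g_def tbl_def)
  have r1: "reach (Hc 2) {0,1} {0,3}" by (rule step_Hc[of 0 1 3 2 "{0,1}" "{0,1}" "{0,3}", OF _ r0]) (simp_all add: col3 cls_def g_def tbl_def)
  have r2: "reach (Hc 2) {0,1} {1,3}" by (rule step_Hc[of 0 1 3 2 "{0,1}" "{0,1}" "{1,3}", OF _ r0]) (simp_all add: col3 cls_def g_def tbl_def)
  have r3: "reach (Hc 2) {0,1} {0,4}" by (rule step_Hc[of 0 1 4 2 "{0,1}" "{0,1}" "{0,4}", OF _ r0]) (simp_all add: col3 cls_def g_def tbl_def)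
  have r4: "reach (Hc 2) {0,1} {1,4}" by (rule step_Hc[of 0 1 4 2 "{0,1}" "{0,1}" "{1,4}", OF _ r0]) (simp_all add: col3 cls_def g_def tbl_def)
  have r5: "reach (Hc 2) {0,1} {0,5}" by (rule step_Hc[of 0 1 5 2 "{0,1}" "{0,1}" "{0,5}", OF _ r0]) (simp_all add: col3 cls_def g_def tbl_def)
  have r6: "reach (Hc 2) {0,1} {1,5}" by (rule step_Hc[of 0 1 5 2 "{0,1}" "{0,1}" "{1,5}", OF _ r0]) (simp_all add: col3 cls_def g_def tbl_def)
  have r7: "reach (Hc 2) {0,1} {0,2}" by (rule step_Hc[of 0 2 3 2 "{0,1}" "{0,3}" "{0,2}", OF _ r1]) (simp_all add: col3 cls_def g_def tbl_def)
  have r8: "reach (Hc 2) {0,1} {2,3}" by (rule step_Hc[of 0 2 3 2 "{0,1}" "{0,3}" "{2,3}", OF _ r1]) (simp_all add: col3 cls_def g_def tbl_def)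
  have r9: "reach (Hc 2) {0,1} {0,6}" by (rule step_Hc[of 0 3 6 2 "{0,1}" "{0,3}" "{0,6}", OF _ r1]) (simp_all add: col3 cls_def g_def tbl_def)
  have r10: "reach (Hc 2) {0,1} {3,6}" by (rule step_Hc[of 0 3 6 2 "{0,1}" "{0,3}" "{3,6}", OF _ r1]) (simp_all add: col3 cls_def g_def tbl_def)
  have r11: "reach (Hc 2) {0,1} {0,7}" by (rule step_Hc[of 0 3 7 2 "{0,1}" "{0,3}" "{0,7}", OF _ r1]) (simp_all add: col3 cls_def g_def tbl_def)
  have r12: "reach (Hc 2) {0,1} {3,7}" by (rule step_Hc[of 0 3 7 2 "{0,1}" "{0,3}" "{3,7}", OF _ r1]) (simp_all add: col3 cls_def g_def tbl_def)
  have r13: "reach (Hc 2) {0,1} {0,8}" by (rule step_Hc[of 0 3 8 2 "{0,1}" "{0,3}" "{0,8}", OF _ r1]) (simp_all add: col3 cls_def g_def tbl_def)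
  have r14: "reach (Hc 2) {0,1} {3,8}" by (rule step_Hc[of 0 3 8 2 "{0,1}" "{0,3}" "{3,8}", OF _ r1]) (simp_all add: col3 cls_def g_def tbl_def)
  have r15: "reach (Hc 2) {0,1} {1,2}" by (rule step_Hc[of 1 2 3 2 "{0,1}" "{1,3}" "{1,2}", OF _ r2]) (simp_all add: col3 cls_def g_def tbl_def)
  have r16: "reach (Hc 2) {0,1} {1,6}" by (rule step_Hc[of 1 3 6 2 "{0,1}" "{1,3}" "{1,6}", OF _ r2]) (simp_all add: col3 cls_def g_def tbl_def)
  have r17: "reach (Hc 2) {0,1} {1,7}" by (rule step_Hc[of 1 3 7 2 "{0,1}" "{1,3}" "{1,7}", OF _ r2]) (simp_all add: col3 cls_def g_def tbl_def)
  have r18: "reach (Hc 2) {0,1} {1,8}" by (rule step_Hc[of 1 3 8 2 "{0,1}" "{1,3}" "{1,8}", OF _ r2]) (simp_all add: col3 cls_def g_def tbl_def)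
  have r19: "reach (Hc 2) {0,1} {2,4}" by (rule step_Hc[of 0 2 4 2 "{0,1}" "{0,4}" "{2,4}", OF _ r3]) (simp_all add: col3 cls_def g_def tbl_def)
  have r20: "reach (Hc 2) {0,1} {4,6}" by (rule step_Hc[of 0 4 6 2 "{0,1}" "{0,4}" "{4,6}", OF _ r3]) (simp_all add: col3 cls_def g_def tbl_def)
  have r21: "reach (Hc 2) {0,1} {4,7}" by (rule step_Hc[of 0 4 7 2 "{0,1}" "{0,4}" "{4,7}", OF _ r3]) (simp_all add: col3 cls_def g_def tbl_def)
  have r22: "reach (Hc 2) {0,1} {4,8}" by (rule step_Hc[of 0 4 8 2 "{0,1}" "{0,4}" "{4,8}", OF _ r3]) (simp_all add: col3 cls_def g_def tbl_def)
  have r23: "reach (Hc 2) {0,1} {2,5}" by (rule step_Hc[of 0 2 5 2 "{0,1}" "{0,5}" "{2,5}", OF _ r5]) (simp_all add: col3 cls_def g_def tbl_def)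
  have r24: "reach (Hc 2) {0,1} {5,6}" by (rule step_Hc[of 0 5 6 2 "{0,1}" "{0,5}" "{5,6}", OF _ r5]) (simp_all add: col3 cls_def g_def tbl_def)
  have r25: "reach (Hc 2) {0,1} {5,7}" by (rule step_Hc[of 0 5 7 2 "{0,1}" "{0,5}" "{5,7}", OF _ r5]) (simp_all add: col3 cls_def g_def tbl_def)
  have r26: "reach (Hc 2) {0,1} {5,8}" by (rule step_Hc[of 0 5 8 2 "{0,1}" "{0,5}" "{5,8}", OF _ r5]) (simp_all add: col3 cls_def g_def tbl_def)
  have r27: "reach (Hc 2) {0,1} {2,6}" by (rule step_Hc[of 2 3 6 2 "{0,1}" "{2,3}" "{2,6}", OF _ r8]) (simp_all add: col3 cls_def g_def tbl_def)
  have r28: "reach (Hc 2) {0,1} {2,7}" by (rule step_Hc[of 2 3 7 2 "{0,1}" "{2,3}" "{2,7}", OF _ r8]) (simp_all add: col3 cls_def g_def tbl_def)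
  have r29: "reach (Hc 2) {0,1} {2,8}" by (rule step_Hc[of 2 3 8 2 "{0,1}" "{2,3}" "{2,8}", OF _ r8]) (simp_all add: col3 cls_def g_def tbl_def)
  have r30: "reach (Hc 2) {0,1} {6,7}" by (rule step_Hc[of 0 6 7 2 "{0,1}" "{0,6}" "{6,7}", OF _ r9]) (simp_all add: col3 cls_def g_def tbl_def)
  have r31: "reach (Hc 2) {0,1} {6,8}" by (rule step_Hc[of 0 6 8 2 "{0,1}" "{0,6}" "{6,8}", OF _ r9]) (simp_all add: col3 cls_def g_def tbl_def)
  have r32: "reach (Hc 2) {0,1} {3,11}" by (rule step_Hc[of 3 6 11 2 "{0,1}" "{3,6}" "{3,11}", OF _ r10]) (simp_all add: col3 cls_def g_def tbl_def)
  have r33: "reach (Hc 2) {0,1} {6,11}" by (rule step_Hc[of 3 6 11 2 "{0,1}" "{3,6}" "{6,11}", OF _ r10]) (simp_all add: col3 cls_def g_def tbl_def)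
  have r34: "reach (Hc 2) {0,1} {3,12}" by (rule step_Hc[of 3 6 12 2 "{0,1}" "{3,6}" "{3,12}", OF _ r10]) (simp_all add: col3 cls_def g_def tbl_def)
  have r35: "reach (Hc 2) {0,1} {6,12}" by (rule step_Hc[of 3 6 12 2 "{0,1}" "{3,6}" "{6,12}", OF _ r10]) (simp_all add: col3 cls_def g_def tbl_def)
  have r36: "reach (Hc 2) {0,1} {7,8}" by (rule step_Hc[of 0 7 8 2 "{0,1}" "{0,7}" "{7,8}", OF _ r11]) (simp_all add: col3 cls_def g_def tbl_def)
  have r37: "reach (Hc 2) {0,1} {7,11}" by (rule step_Hc[of 3 7 11 2 "{0,1}" "{3,7}" "{7,11}", OF _ r12]) (simp_all add: col3 cls_def g_def tbl_def)
  have r38: "reach (Hc 2) {0,1} {7,12}" by (rule step_Hc[of 3 7 12 2 "{0,1}" "{3,7}" "{7,12}", OF _ r12]) (simp_all add: col3 cls_def g_def tbl_def)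
  have r39: "reach (Hc 2) {0,1} {8,11}" by (rule step_Hc[of 3 8 11 2 "{0,1}" "{3,8}" "{8,11}", OF _ r14]) (simp_all add: col3 cls_def g_def tbl_def)
  have r40: "reach (Hc 2) {0,1} {8,12}" by (rule step_Hc[of 3 8 12 2 "{0,1}" "{3,8}" "{8,12}", OF _ r14]) (simp_all add: col3 cls_def g_def tbl_def)
  have r41: "reach (Hc 2) {0,1} {4,11}" by (rule step_Hc[of 4 6 11 2 "{0,1}" "{4,6}" "{4,11}", OF _ r20]) (simp_all add: col3 cls_def g_def tbl_def)
  have r42: "reach (Hc 2) {0,1} {4,12}" by (rule step_Hc[of 4 6 12 2 "{0,1}" "{4,6}" "{4,12}", OF _ r20]) (simp_all add: col3 cls_def g_def tbl_def)
  have r43: "reach (Hc 2) {0,1} {5,11}" by (rule step_Hc[of 5 6 11 2 "{0,1}" "{5,6}" "{5,11}", OF _ r24]) (simp_all add: col3 cls_def g_def tbl_def)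
  have r44: "reach (Hc 2) {0,1} {5,12}" by (rule step_Hc[of 5 6 12 2 "{0,1}" "{5,6}" "{5,12}", OF _ r24]) (simp_all add: col3 cls_def g_def tbl_def)
  have r45: "reach (Hc 2) {0,1} {6,13}" by (rule step_Hc[of 6 7 13 2 "{0,1}" "{6,7}" "{6,13}", OF _ r30]) (simp_all add: col3 cls_def g_def tbl_def)
  have r46: "reach (Hc 2) {0,1} {7,13}" by (rule step_Hc[of 6 7 13 2 "{0,1}" "{6,7}" "{7,13}", OF _ r30]) (simp_all add: col3 cls_def g_def tbl_def)
  have r47: "reach (Hc 2) {0,1} {6,14}" by (rule step_Hc[of 6 7 14 2 "{0,1}" "{6,7}" "{6,14}", OF _ r30]) (simp_all add: col3 cls_def g_def tbl_def)
  have r48: "reach (Hc 2) {0,1} {7,14}" by (rule step_Hc[of 6 7 14 2 "{0,1}" "{6,7}" "{7,14}", OF _ r30]) (simp_all add: col3 cls_def g_def tbl_def)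
  have r49: "reach (Hc 2) {0,1} {8,13}" by (rule step_Hc[of 6 8 13 2 "{0,1}" "{6,8}" "{8,13}", OF _ r31]) (simp_all add: col3 cls_def g_def tbl_def)
  have r50: "reach (Hc 2) {0,1} {8,14}" by (rule step_Hc[of 6 8 14 2 "{0,1}" "{6,8}" "{8,14}", OF _ r31]) (simp_all add: col3 cls_def g_def tbl_def)
  have r51: "reach (Hc 2) {0,1} {3,13}" by (rule step_Hc[of 3 11 13 2 "{0,1}" "{3,11}" "{3,13}", OF _ r32]) (simp_all add: col3 cls_def g_def tbl_def)
  have r52: "reach (Hc 2) {0,1} {11,13}" by (rule step_Hc[of 3 11 13 2 "{0,1}" "{3,11}" "{11,13}", OF _ r32]) (simp_all add: col3 cls_def g_def tbl_def)
  have r53: "reach (Hc 2) {0,1} {3,14}" by (rule step_Hc[of 3 11 14 2 "{0,1}" "{3,11}" "{3,14}", OF _ r32]) (simp_all add: col3 cls_def g_def tbl_def)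
  have r54: "reach (Hc 2) {0,1} {11,14}" by (rule step_Hc[of 3 11 14 2 "{0,1}" "{3,11}" "{11,14}", OF _ r32]) (simp_all add: col3 cls_def g_def tbl_def)
  have r55: "reach (Hc 2) {0,1} {3,15}" by (rule step_Hc[of 3 11 15 2 "{0,1}" "{3,11}" "{3,15}", OF _ r32]) (simp_all add: col3 cls_def g_def tbl_def)
  have r56: "reach (Hc 2) {0,1} {11,15}" by (rule step_Hc[of 3 11 15 2 "{0,1}" "{3,11}" "{11,15}", OF _ r32]) (simp_all add: col3 cls_def g_def tbl_def)
  have r57: "reach (Hc 2) {0,1} {3,16}" by (rule step_Hc[of 3 11 16 2 "{0,1}" "{3,11}" "{3,16}", OF _ r32]) (simp_all add: col3 cls_def g_def tbl_def)
  have r58: "reach (Hc 2) {0,1} {11,16}" by (rule step_Hc[of 3 11 16 2 "{0,1}" "{3,11}" "{11,16}", OF _ r32]) (simp_all add: col3 cls_def g_def tbl_def)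
  have r59: "reach (Hc 2) {0,1} {11,12}" by (rule step_Hc[of 6 11 12 2 "{0,1}" "{6,11}" "{11,12}", OF _ r33]) (simp_all add: col3 cls_def g_def tbl_def)
  have r60: "reach (Hc 2) {0,1} {12,13}" by (rule step_Hc[of 3 12 13 2 "{0,1}" "{3,12}" "{12,13}", OF _ r34]) (simp_all add: col3 cls_def g_def tbl_def)
  have r61: "reach (Hc 2) {0,1} {12,14}" by (rule step_Hc[of 3 12 14 2 "{0,1}" "{3,12}" "{12,14}", OF _ r34]) (simp_all add: col3 cls_def g_def tbl_def)
  have r62: "reach (Hc 2) {0,1} {12,15}" by (rule step_Hc[of 3 12 15 2 "{0,1}" "{3,12}" "{12,15}", OF _ r34]) (simp_all add: col3 cls_def g_def tbl_def)
  have r63: "reach (Hc 2) {0,1} {12,16}" by (rule step_Hc[of 3 12 16 2 "{0,1}" "{3,12}" "{12,16}", OF _ r34]) (simp_all add: col3 cls_def g_def tbl_def)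
  have r64: "reach (Hc 2) {0,1} {4,13}" by (rule step_Hc[of 4 11 13 2 "{0,1}" "{4,11}" "{4,13}", OF _ r41]) (simp_all add: col3 cls_def g_def tbl_def)
  have r65: "reach (Hc 2) {0,1} {4,14}" by (rule step_Hc[of 4 11 14 2 "{0,1}" "{4,11}" "{4,14}", OF _ r41]) (simp_all add: col3 cls_def g_def tbl_def)
  have r66: "reach (Hc 2) {0,1} {4,15}" by (rule step_Hc[of 4 11 15 2 "{0,1}" "{4,11}" "{4,15}", OF _ r41]) (simp_all add: col3 cls_def g_def tbl_def)
  have r67: "reach (Hc 2) {0,1} {4,16}" by (rule step_Hc[of 4 11 16 2 "{0,1}" "{4,11}" "{4,16}", OF _ r41]) (simp_all add: col3 cls_def g_def tbl_def)
  have r68: "reach (Hc 2) {0,1} {5,13}" by (rule step_Hc[of 5 11 13 2 "{0,1}" "{5,11}" "{5,13}", OF _ r43]) (simp_all add: col3 cls_def g_def tbl_def)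
  have r69: "reach (Hc 2) {0,1} {5,14}" by (rule step_Hc[of 5 11 14 2 "{0,1}" "{5,11}" "{5,14}", OF _ r43]) (simp_all add: col3 cls_def g_def tbl_def)
  have r70: "reach (Hc 2) {0,1} {5,15}" by (rule step_Hc[of 5 11 15 2 "{0,1}" "{5,11}" "{5,15}", OF _ r43]) (simp_all add: col3 cls_def g_def tbl_def)
  have r71: "reach (Hc 2) {0,1} {5,16}" by (rule step_Hc[of 5 11 16 2 "{0,1}" "{5,11}" "{5,16}", OF _ r43]) (simp_all add: col3 cls_def g_def tbl_def)
  have r72: "reach (Hc 2) {0,1} {13,14}" by (rule step_Hc[of 6 13 14 2 "{0,1}" "{6,13}" "{13,14}", OF _ r45]) (simp_all add: col3 cls_def g_def tbl_def)
  have r73: "reach (Hc 2) {0,1} {3,4}" by (rule step_Hc[of 3 4 15 2 "{0,1}" "{3,15}" "{3,4}", OF _ r55]) (simp_all add: col3 cls_def g_def tbl_def)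
  have r74: "reach (Hc 2) {0,1} {3,5}" by (rule step_Hc[of 3 5 15 2 "{0,1}" "{3,15}" "{3,5}", OF _ r55]) (simp_all add: col3 cls_def g_def tbl_def)
  have r75: "reach (Hc 2) {0,1} {0,11}" by (rule step_Hc[of 0 11 15 2 "{0,1}" "{11,15}" "{0,11}", OF _ r56]) (simp_all add: col3 cls_def g_def tbl_def)
  have r76: "reach (Hc 2) {0,1} {0,15}" by (rule step_Hc[of 0 11 15 2 "{0,1}" "{11,15}" "{0,15}", OF _ r56]) (simp_all add: col3 cls_def g_def tbl_def)
  have r77: "reach (Hc 2) {0,1} {1,11}" by (rule step_Hc[of 1 11 15 2 "{0,1}" "{11,15}" "{1,11}", OF _ r56]) (simp_all add: col3 cls_def g_def tbl_def)
  have r78: "reach (Hc 2) {0,1} {1,15}" by (rule step_Hc[of 1 11 15 2 "{0,1}" "{11,15}" "{1,15}", OF _ r56]) (simp_all add: col3 cls_def g_def tbl_def)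
  have r79: "reach (Hc 2) {0,1} {2,11}" by (rule step_Hc[of 2 11 15 2 "{0,1}" "{11,15}" "{2,11}", OF _ r56]) (simp_all add: col3 cls_def g_def tbl_def)
  have r80: "reach (Hc 2) {0,1} {2,15}" by (rule step_Hc[of 2 11 15 2 "{0,1}" "{11,15}" "{2,15}", OF _ r56]) (simp_all add: col3 cls_def g_def tbl_def)
  have r81: "reach (Hc 2) {0,1} {9,11}" by (rule step_Hc[of 9 11 15 2 "{0,1}" "{11,15}" "{9,11}", OF _ r56]) (simp_all add: col3 cls_def g_def tbl_def)
  have r82: "reach (Hc 2) {0,1} {9,15}" by (rule step_Hc[of 9 11 15 2 "{0,1}" "{11,15}" "{9,15}", OF _ r56]) (simp_all add: col3 cls_def g_def tbl_def)
  have r83: "reach (Hc 2) {0,1} {10,11}" by (rule step_Hc[of 10 11 15 2 "{0,1}" "{11,15}" "{10,11}", OF _ r56]) (simp_all add: col3 cls_def g_def tbl_def)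
  have r84: "reach (Hc 2) {0,1} {10,15}" by (rule step_Hc[of 10 11 15 2 "{0,1}" "{11,15}" "{10,15}", OF _ r56]) (simp_all add: col3 cls_def g_def tbl_def)
  have r85: "reach (Hc 2) {0,1} {0,16}" by (rule step_Hc[of 0 11 16 2 "{0,1}" "{11,16}" "{0,16}", OF _ r58]) (simp_all add: col3 cls_def g_def tbl_def)
  have r86: "reach (Hc 2) {0,1} {1,16}" by (rule step_Hc[of 1 11 16 2 "{0,1}" "{11,16}" "{1,16}", OF _ r58]) (simp_all add: col3 cls_def g_def tbl_def)
  have r87: "reach (Hc 2) {0,1} {2,16}" by (rule step_Hc[of 2 11 16 2 "{0,1}" "{11,16}" "{2,16}", OF _ r58]) (simp_all add: col3 cls_def g_def tbl_def)
  have r88: "reach (Hc 2) {0,1} {9,16}" by (rule step_Hc[of 9 11 16 2 "{0,1}" "{11,16}" "{9,16}", OF _ r58]) (simp_all add: col3 cls_def g_def tbl_def)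
  have r89: "reach (Hc 2) {0,1} {10,16}" by (rule step_Hc[of 10 11 16 2 "{0,1}" "{11,16}" "{10,16}", OF _ r58]) (simp_all add: col3 cls_def g_def tbl_def)
  have r90: "reach (Hc 2) {0,1} {0,12}" by (rule step_Hc[of 0 12 15 2 "{0,1}" "{12,15}" "{0,12}", OF _ r62]) (simp_all add: col3 cls_def g_def tbl_def)
  have r91: "reach (Hc 2) {0,1} {1,12}" by (rule step_Hc[of 1 12 15 2 "{0,1}" "{12,15}" "{1,12}", OF _ r62]) (simp_all add: col3 cls_def g_def tbl_def)
  have r92: "reach (Hc 2) {0,1} {2,12}" by (rule step_Hc[of 2 12 15 2 "{0,1}" "{12,15}" "{2,12}", OF _ r62]) (simp_all add: col3 cls_def g_def tbl_def)
  have r93: "reach (Hc 2) {0,1} {9,12}" by (rule step_Hc[of 9 12 15 2 "{0,1}" "{12,15}" "{9,12}", OF _ r62]) (simp_all add: col3 cls_def g_def tbl_def)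
  have r94: "reach (Hc 2) {0,1} {10,12}" by (rule step_Hc[of 10 12 15 2 "{0,1}" "{12,15}" "{10,12}", OF _ r62]) (simp_all add: col3 cls_def g_def tbl_def)
  have r95: "reach (Hc 2) {0,1} {4,5}" by (rule step_Hc[of 4 5 15 2 "{0,1}" "{4,15}" "{4,5}", OF _ r66]) (simp_all add: col3 cls_def g_def tbl_def)
  have r96: "reach (Hc 2) {0,1} {3,9}" by (rule step_Hc[of 3 4 9 2 "{0,1}" "{3,4}" "{3,9}", OF _ r73]) (simp_all add: col3 cls_def g_def tbl_def)
  have r97: "reach (Hc 2) {0,1} {4,9}" by (rule step_Hc[of 3 4 9 2 "{0,1}" "{3,4}" "{4,9}", OF _ r73]) (simp_all add: col3 cls_def g_def tbl_def)
  have r98: "reach (Hc 2) {0,1} {3,10}" by (rule step_Hc[of 3 4 10 2 "{0,1}" "{3,4}" "{3,10}", OF _ r73]) (simp_all add: col3 cls_def g_def tbl_def)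
  have r99: "reach (Hc 2) {0,1} {4,10}" by (rule step_Hc[of 3 4 10 2 "{0,1}" "{3,4}" "{4,10}", OF _ r73]) (simp_all add: col3 cls_def g_def tbl_def)
  have r100: "reach (Hc 2) {0,1} {5,9}" by (rule step_Hc[of 3 5 9 2 "{0,1}" "{3,5}" "{5,9}", OF _ r74]) (simp_all add: col3 cls_def g_def tbl_def)
  have r101: "reach (Hc 2) {0,1} {5,10}" by (rule step_Hc[of 3 5 10 2 "{0,1}" "{3,5}" "{5,10}", OF _ r74]) (simp_all add: col3 cls_def g_def tbl_def)
  have r102: "reach (Hc 2) {0,1} {0,13}" by (rule step_Hc[of 0 13 15 2 "{0,1}" "{0,15}" "{0,13}", OF _ r76]) (simp_all add: col3 cls_def g_def tbl_def)
  have r103: "reach (Hc 2) {0,1} {13,15}" by (rule step_Hc[of 0 13 15 2 "{0,1}" "{0,15}" "{13,15}", OF _ r76]) (simp_all add: col3 cls_def g_def tbl_def)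
  have r104: "reach (Hc 2) {0,1} {0,14}" by (rule step_Hc[of 0 14 15 2 "{0,1}" "{0,15}" "{0,14}", OF _ r76]) (simp_all add: col3 cls_def g_def tbl_def)
  have r105: "reach (Hc 2) {0,1} {14,15}" by (rule step_Hc[of 0 14 15 2 "{0,1}" "{0,15}" "{14,15}", OF _ r76]) (simp_all add: col3 cls_def g_def tbl_def)
  have r106: "reach (Hc 2) {0,1} {15,16}" by (rule step_Hc[of 0 15 16 2 "{0,1}" "{0,15}" "{15,16}", OF _ r76]) (simp_all add: col3 cls_def g_def tbl_def)
  have r107: "reach (Hc 2) {0,1} {1,13}" by (rule step_Hc[of 1 13 15 2 "{0,1}" "{1,15}" "{1,13}", OF _ r78]) (simp_all add: col3 cls_def g_def tbl_def)
  have r108: "reach (Hc 2) {0,1} {1,14}" by (rule step_Hc[of 1 14 15 2 "{0,1}" "{1,15}" "{1,14}", OF _ r78]) (simp_all add: col3 cls_def g_def tbl_def)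
  have r109: "reach (Hc 2) {0,1} {2,13}" by (rule step_Hc[of 2 13 15 2 "{0,1}" "{2,15}" "{2,13}", OF _ r80]) (simp_all add: col3 cls_def g_def tbl_def)
  have r110: "reach (Hc 2) {0,1} {2,14}" by (rule step_Hc[of 2 14 15 2 "{0,1}" "{2,15}" "{2,14}", OF _ r80]) (simp_all add: col3 cls_def g_def tbl_def)
  have r111: "reach (Hc 2) {0,1} {9,10}" by (rule step_Hc[of 9 10 11 2 "{0,1}" "{9,11}" "{9,10}", OF _ r81]) (simp_all add: col3 cls_def g_def tbl_def)
  have r112: "reach (Hc 2) {0,1} {6,9}" by (rule step_Hc[of 6 9 15 2 "{0,1}" "{9,15}" "{6,9}", OF _ r82]) (simp_all add: col3 cls_def g_def tbl_def)
  have r113: "reach (Hc 2) {0,1} {6,15}" by (rule step_Hc[of 6 9 15 2 "{0,1}" "{9,15}" "{6,15}", OF _ r82]) (simp_all add: col3 cls_def g_def tbl_def)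
  have r114: "reach (Hc 2) {0,1} {7,9}" by (rule step_Hc[of 7 9 15 2 "{0,1}" "{9,15}" "{7,9}", OF _ r82]) (simp_all add: col3 cls_def g_def tbl_def)
  have r115: "reach (Hc 2) {0,1} {7,15}" by (rule step_Hc[of 7 9 15 2 "{0,1}" "{9,15}" "{7,15}", OF _ r82]) (simp_all add: col3 cls_def g_def tbl_def)
  have r116: "reach (Hc 2) {0,1} {8,9}" by (rule step_Hc[of 8 9 15 2 "{0,1}" "{9,15}" "{8,9}", OF _ r82]) (simp_all add: col3 cls_def g_def tbl_def)
  have r117: "reach (Hc 2) {0,1} {8,15}" by (rule step_Hc[of 8 9 15 2 "{0,1}" "{9,15}" "{8,15}", OF _ r82]) (simp_all add: col3 cls_def g_def tbl_def)
  have r118: "reach (Hc 2) {0,1} {9,13}" by (rule step_Hc[of 9 13 15 2 "{0,1}" "{9,15}" "{9,13}", OF _ r82]) (simp_all add: col3 cls_def g_def tbl_def)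
  have r119: "reach (Hc 2) {0,1} {9,14}" by (rule step_Hc[of 9 14 15 2 "{0,1}" "{9,15}" "{9,14}", OF _ r82]) (simp_all add: col3 cls_def g_def tbl_def)
  have r120: "reach (Hc 2) {0,1} {6,10}" by (rule step_Hc[of 6 10 15 2 "{0,1}" "{10,15}" "{6,10}", OF _ r84]) (simp_all add: col3 cls_def g_def tbl_def)
  have r121: "reach (Hc 2) {0,1} {7,10}" by (rule step_Hc[of 7 10 15 2 "{0,1}" "{10,15}" "{7,10}", OF _ r84]) (simp_all add: col3 cls_def g_def tbl_def)
  have r122: "reach (Hc 2) {0,1} {8,10}" by (rule step_Hc[of 8 10 15 2 "{0,1}" "{10,15}" "{8,10}", OF _ r84]) (simp_all add: col3 cls_def g_def tbl_def)
  have r123: "reach (Hc 2) {0,1} {10,13}" by (rule step_Hc[of 10 13 15 2 "{0,1}" "{10,15}" "{10,13}", OF _ r84]) (simp_all add: col3 cls_def g_def tbl_def)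
  have r124: "reach (Hc 2) {0,1} {10,14}" by (rule step_Hc[of 10 14 15 2 "{0,1}" "{10,15}" "{10,14}", OF _ r84]) (simp_all add: col3 cls_def g_def tbl_def)
  have r125: "reach (Hc 2) {0,1} {13,16}" by (rule step_Hc[of 0 13 16 2 "{0,1}" "{0,16}" "{13,16}", OF _ r85]) (simp_all add: col3 cls_def g_def tbl_def)
  have r126: "reach (Hc 2) {0,1} {14,16}" by (rule step_Hc[of 0 14 16 2 "{0,1}" "{0,16}" "{14,16}", OF _ r85]) (simp_all add: col3 cls_def g_def tbl_def)
  have r127: "reach (Hc 2) {0,1} {6,16}" by (rule step_Hc[of 6 9 16 2 "{0,1}" "{9,16}" "{6,16}", OF _ r88]) (simp_all add: col3 cls_def g_def tbl_def)
  have r128: "reach (Hc 2) {0,1} {7,16}" by (rule step_Hc[of 7 9 16 2 "{0,1}" "{9,16}" "{7,16}", OF _ r88]) (simp_all add: col3 cls_def g_def tbl_def)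
  have r129: "reach (Hc 2) {0,1} {8,16}" by (rule step_Hc[of 8 9 16 2 "{0,1}" "{9,16}" "{8,16}", OF _ r88]) (simp_all add: col3 cls_def g_def tbl_def)
  have r130: "reach (Hc 2) {0,1} {0,9}" by (rule step_Hc[of 0 9 10 2 "{0,1}" "{9,10}" "{0,9}", OF _ r111]) (simp_all add: col3 cls_def g_def tbl_def)
  have r131: "reach (Hc 2) {0,1} {0,10}" by (rule step_Hc[of 0 9 10 2 "{0,1}" "{9,10}" "{0,10}", OF _ r111]) (simp_all add: col3 cls_def g_def tbl_def)
  have r132: "reach (Hc 2) {0,1} {1,9}" by (rule step_Hc[of 1 9 10 2 "{0,1}" "{9,10}" "{1,9}", OF _ r111]) (simp_all add: col3 cls_def g_def tbl_def)
  have r133: "reach (Hc 2) {0,1} {1,10}" by (rule step_Hc[of 1 9 10 2 "{0,1}" "{9,10}" "{1,10}", OF _ r111]) (simp_all add: col3 cls_def g_def tbl_def)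
  have r134: "reach (Hc 2) {0,1} {2,9}" by (rule step_Hc[of 2 9 10 2 "{0,1}" "{9,10}" "{2,9}", OF _ r111]) (simp_all add: col3 cls_def g_def tbl_def)
  have r135: "reach (Hc 2) {0,1} {2,10}" by (rule step_Hc[of 2 9 10 2 "{0,1}" "{9,10}" "{2,10}", OF _ r111]) (simp_all add: col3 cls_def g_def tbl_def)
  have all: "\<forall>b<17. \<forall>a<b. reach (Hc 2) {0,1} {a,b}"
    by (simp del: One_nat_def add: All_less_numeral All_less_one r0 r1 r2 r3 r4 r5 r6 r7 r8 r9 r10 r11 r12 r13 r14 r15 r16 r17 r18 r19 r20 r21 r22 r23 r24 r25 r26 r27 r28 r29 r30 r31 r32 r33 r34 r35 r36 r37 r38 r39 r40 r41 r42 r43 r44 r45 r46 r47 r48 r49 r50 r51 r52 r53 r54 r55 r56 r57 r58 r59 r60 r61 r62 r63 r64 r65 r66 r67 r68 r69 r70 r71 r72 r73 r74 r75 r76 r77 r78 r79 r80 r81 r82 r83 r84 r85 r86 r87 r88 r89 r90 r91 r92 r93 r94 r95 r96 r97 r98 r99 r100 r101 r102 r103 r104 r105 r106 r107 r108 r109 r110 r111 r112 r113 r114 r115 r116 r117 r118 r119 r120 r121 r122 r123 r124 r125 r126 r127 r128 r129 r130 r131 r132 r133 r134 r135)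
  show ?thesis by (rule hconn_from_base[OF Hc_card pair_cases[where R="reach (Hc 2) {0,1}", OF _ all] card01])
qed

lemma conn3: "hconnected {0..<17} (Hc 3)"
proof -
  have r0: "reach (Hc 3) {0,1} {0,1}" by (rule edge_Hc[of 0 1 2 3 "{0,1}" "{0,1}"]) (simp_all add: col3 cls_def g_def tbl_def)
  have r1: "reach (Hc 3) {0,1} {0,2}" by (rule step_Hc[of 0 1 2 3 "{0,1}" "{0,1}" "{0,2}", OF _ r0]) (simp_all add: col3 cls_def g_def tbl_def)
  have r2: "reach (Hc 3) {0,1} {1,2}" by (rule step_Hc[of 0 1 2 3 "{0,1}" "{0,1}" "{1,2}", OF _ r0]) (simp_all add: col3 cls_def g_def tbl_def)
  have r3: "reach (Hc 3) {0,1} {0,6}" by (rule step_Hc[of 0 1 6 3 "{0,1}" "{0,1}" "{0,6}", OF _ r0]) (simp_all add: col3 cls_def g_def tbl_def)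
  have r4: "reach (Hc 3) {0,1} {1,6}" by (rule step_Hc[of 0 1 6 3 "{0,1}" "{0,1}" "{1,6}", OF _ r0]) (simp_all add: col3 cls_def g_def tbl_def)
  have r5: "reach (Hc 3) {0,1} {0,7}" by (rule step_Hc[of 0 1 7 3 "{0,1}" "{0,1}" "{0,7}", OF _ r0]) (simp_all add: col3 cls_def g_def tbl_def)
  have r6: "reach (Hc 3) {0,1} {1,7}" by (rule step_Hc[of 0 1 7 3 "{0,1}" "{0,1}" "{1,7}", OF _ r0]) (simp_all add: col3 cls_def g_def tbl_def)
  have r7: "reach (Hc 3) {0,1} {0,8}" by (rule step_Hc[of 0 1 8 3 "{0,1}" "{0,1}" "{0,8}", OF _ r0]) (simp_all add: col3 cls_def g_def tbl_def)
  have r8: "reach (Hc 3) {0,1} {1,8}" by (rule step_Hc[of 0 1 8 3 "{0,1}" "{0,1}" "{1,8}", OF _ r0]) (simp_all add: col3 cls_def g_def tbl_def)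
  have r9: "reach (Hc 3) {0,1} {0,11}" by (rule step_Hc[of 0 1 11 3 "{0,1}" "{0,1}" "{0,11}", OF _ r0]) (simp_all add: col3 cls_def g_def tbl_def)
  have r10: "reach (Hc 3) {0,1} {1,11}" by (rule step_Hc[of 0 1 11 3 "{0,1}" "{0,1}" "{1,11}", OF _ r0]) (simp_all add: col3 cls_def g_def tbl_def)
  have r11: "reach (Hc 3) {0,1} {0,12}" by (rule step_Hc[of 0 1 12 3 "{0,1}" "{0,1}" "{0,12}", OF _ r0]) (simp_all add: col3 cls_def g_def tbl_def)
  have r12: "reach (Hc 3) {0,1} {1,12}" by (rule step_Hc[of 0 1 12 3 "{0,1}" "{0,1}" "{1,12}", OF _ r0]) (simp_all add: col3 cls_def g_def tbl_def)
  have r13: "reach (Hc 3) {0,1} {0,15}" by (rule step_Hc[of 0 1 15 3 "{0,1}" "{0,1}" "{0,15}", OF _ r0]) (simp_all add: col3 cls_def g_def tbl_def)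
  have r14: "reach (Hc 3) {0,1} {1,15}" by (rule step_Hc[of 0 1 15 3 "{0,1}" "{0,1}" "{1,15}", OF _ r0]) (simp_all add: col3 cls_def g_def tbl_def)
  have r15: "reach (Hc 3) {0,1} {0,16}" by (rule step_Hc[of 0 1 16 3 "{0,1}" "{0,1}" "{0,16}", OF _ r0]) (simp_all add: col3 cls_def g_def tbl_def)
  have r16: "reach (Hc 3) {0,1} {1,16}" by (rule step_Hc[of 0 1 16 3 "{0,1}" "{0,1}" "{1,16}", OF _ r0]) (simp_all add: col3 cls_def g_def tbl_def)
  have r17: "reach (Hc 3) {0,1} {2,6}" by (rule step_Hc[of 0 2 6 3 "{0,1}" "{0,2}" "{2,6}", OF _ r1]) (simp_all add: col3 cls_def g_def tbl_def)
  have r18: "reach (Hc 3) {0,1} {2,7}" by (rule step_Hc[of 0 2 7 3 "{0,1}" "{0,2}" "{2,7}", OF _ r1]) (simp_all add: col3 cls_def g_def tbl_def)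
  have r19: "reach (Hc 3) {0,1} {2,8}" by (rule step_Hc[of 0 2 8 3 "{0,1}" "{0,2}" "{2,8}", OF _ r1]) (simp_all add: col3 cls_def g_def tbl_def)
  have r20: "reach (Hc 3) {0,1} {2,11}" by (rule step_Hc[of 0 2 11 3 "{0,1}" "{0,2}" "{2,11}", OF _ r1]) (simp_all add: col3 cls_def g_def tbl_def)
  have r21: "reach (Hc 3) {0,1} {2,12}" by (rule step_Hc[of 0 2 12 3 "{0,1}" "{0,2}" "{2,12}", OF _ r1]) (simp_all add: col3 cls_def g_def tbl_def)
  have r22: "reach (Hc 3) {0,1} {2,15}" by (rule step_Hc[of 0 2 15 3 "{0,1}" "{0,2}" "{2,15}", OF _ r1]) (simp_all add: col3 cls_def g_def tbl_def)
  have r23: "reach (Hc 3) {0,1} {2,16}" by (rule step_Hc[of 0 2 16 3 "{0,1}" "{0,2}" "{2,16}", OF _ r1]) (simp_all add: col3 cls_def g_def tbl_def)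
  have r24: "reach (Hc 3) {0,1} {0,13}" by (rule step_Hc[of 0 6 13 3 "{0,1}" "{0,6}" "{0,13}", OF _ r3]) (simp_all add: col3 cls_def g_def tbl_def)
  have r25: "reach (Hc 3) {0,1} {6,13}" by (rule step_Hc[of 0 6 13 3 "{0,1}" "{0,6}" "{6,13}", OF _ r3]) (simp_all add: col3 cls_def g_def tbl_def)
  have r26: "reach (Hc 3) {0,1} {0,14}" by (rule step_Hc[of 0 6 14 3 "{0,1}" "{0,6}" "{0,14}", OF _ r3]) (simp_all add: col3 cls_def g_def tbl_def)
  have r27: "reach (Hc 3) {0,1} {6,14}" by (rule step_Hc[of 0 6 14 3 "{0,1}" "{0,6}" "{6,14}", OF _ r3]) (simp_all add: col3 cls_def g_def tbl_def)
  have r28: "reach (Hc 3) {0,1} {1,13}" by (rule step_Hc[of 1 6 13 3 "{0,1}" "{1,6}" "{1,13}", OF _ r4]) (simp_all add: col3 cls_def g_def tbl_def)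
  have r29: "reach (Hc 3) {0,1} {1,14}" by (rule step_Hc[of 1 6 14 3 "{0,1}" "{1,6}" "{1,14}", OF _ r4]) (simp_all add: col3 cls_def g_def tbl_def)
  have r30: "reach (Hc 3) {0,1} {7,13}" by (rule step_Hc[of 0 7 13 3 "{0,1}" "{0,7}" "{7,13}", OF _ r5]) (simp_all add: col3 cls_def g_def tbl_def)
  have r31: "reach (Hc 3) {0,1} {7,14}" by (rule step_Hc[of 0 7 14 3 "{0,1}" "{0,7}" "{7,14}", OF _ r5]) (simp_all add: col3 cls_def g_def tbl_def)
  have r32: "reach (Hc 3) {0,1} {8,13}" by (rule step_Hc[of 0 8 13 3 "{0,1}" "{0,8}" "{8,13}", OF _ r7]) (simp_all add: col3 cls_def g_def tbl_def)
  have r33: "reach (Hc 3) {0,1} {8,14}" by (rule step_Hc[of 0 8 14 3 "{0,1}" "{0,8}" "{8,14}", OF _ r7]) (simp_all add: col3 cls_def g_def tbl_def)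
  have r34: "reach (Hc 3) {0,1} {0,9}" by (rule step_Hc[of 0 9 11 3 "{0,1}" "{0,11}" "{0,9}", OF _ r9]) (simp_all add: col3 cls_def g_def tbl_def)
  have r35: "reach (Hc 3) {0,1} {9,11}" by (rule step_Hc[of 0 9 11 3 "{0,1}" "{0,11}" "{9,11}", OF _ r9]) (simp_all add: col3 cls_def g_def tbl_def)
  have r36: "reach (Hc 3) {0,1} {0,10}" by (rule step_Hc[of 0 10 11 3 "{0,1}" "{0,11}" "{0,10}", OF _ r9]) (simp_all add: col3 cls_def g_def tbl_def)
  have r37: "reach (Hc 3) {0,1} {10,11}" by (rule step_Hc[of 0 10 11 3 "{0,1}" "{0,11}" "{10,11}", OF _ r9]) (simp_all add: col3 cls_def g_def tbl_def)
  have r38: "reach (Hc 3) {0,1} {11,12}" by (rule step_Hc[of 0 11 12 3 "{0,1}" "{0,11}" "{11,12}", OF _ r9]) (simp_all add: col3 cls_def g_def tbl_def)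
  have r39: "reach (Hc 3) {0,1} {1,9}" by (rule step_Hc[of 1 9 11 3 "{0,1}" "{1,11}" "{1,9}", OF _ r10]) (simp_all add: col3 cls_def g_def tbl_def)
  have r40: "reach (Hc 3) {0,1} {1,10}" by (rule step_Hc[of 1 10 11 3 "{0,1}" "{1,11}" "{1,10}", OF _ r10]) (simp_all add: col3 cls_def g_def tbl_def)
  have r41: "reach (Hc 3) {0,1} {9,12}" by (rule step_Hc[of 0 9 12 3 "{0,1}" "{0,12}" "{9,12}", OF _ r11]) (simp_all add: col3 cls_def g_def tbl_def)
  have r42: "reach (Hc 3) {0,1} {10,12}" by (rule step_Hc[of 0 10 12 3 "{0,1}" "{0,12}" "{10,12}", OF _ r11]) (simp_all add: col3 cls_def g_def tbl_def)
  have r43: "reach (Hc 3) {0,1} {2,13}" by (rule step_Hc[of 2 6 13 3 "{0,1}" "{2,6}" "{2,13}", OF _ r17]) (simp_all add: col3 cls_def g_def tbl_def)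
  have r44: "reach (Hc 3) {0,1} {2,14}" by (rule step_Hc[of 2 6 14 3 "{0,1}" "{2,6}" "{2,14}", OF _ r17]) (simp_all add: col3 cls_def g_def tbl_def)
  have r45: "reach (Hc 3) {0,1} {2,9}" by (rule step_Hc[of 2 9 11 3 "{0,1}" "{2,11}" "{2,9}", OF _ r20]) (simp_all add: col3 cls_def g_def tbl_def)
  have r46: "reach (Hc 3) {0,1} {2,10}" by (rule step_Hc[of 2 10 11 3 "{0,1}" "{2,11}" "{2,10}", OF _ r20]) (simp_all add: col3 cls_def g_def tbl_def)
  have r47: "reach (Hc 3) {0,1} {3,6}" by (rule step_Hc[of 3 6 13 3 "{0,1}" "{6,13}" "{3,6}", OF _ r25]) (simp_all add: col3 cls_def g_def tbl_def)
  have r48: "reach (Hc 3) {0,1} {3,13}" by (rule step_Hc[of 3 6 13 3 "{0,1}" "{6,13}" "{3,13}", OF _ r25]) (simp_all add: col3 cls_def g_def tbl_def)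
  have r49: "reach (Hc 3) {0,1} {4,6}" by (rule step_Hc[of 4 6 13 3 "{0,1}" "{6,13}" "{4,6}", OF _ r25]) (simp_all add: col3 cls_def g_def tbl_def)
  have r50: "reach (Hc 3) {0,1} {4,13}" by (rule step_Hc[of 4 6 13 3 "{0,1}" "{6,13}" "{4,13}", OF _ r25]) (simp_all add: col3 cls_def g_def tbl_def)
  have r51: "reach (Hc 3) {0,1} {5,6}" by (rule step_Hc[of 5 6 13 3 "{0,1}" "{6,13}" "{5,6}", OF _ r25]) (simp_all add: col3 cls_def g_def tbl_def)
  have r52: "reach (Hc 3) {0,1} {5,13}" by (rule step_Hc[of 5 6 13 3 "{0,1}" "{6,13}" "{5,13}", OF _ r25]) (simp_all add: col3 cls_def g_def tbl_def)
  have r53: "reach (Hc 3) {0,1} {3,14}" by (rule step_Hc[of 3 6 14 3 "{0,1}" "{6,14}" "{3,14}", OF _ r27]) (simp_all add: col3 cls_def g_def tbl_def)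
  have r54: "reach (Hc 3) {0,1} {4,14}" by (rule step_Hc[of 4 6 14 3 "{0,1}" "{6,14}" "{4,14}", OF _ r27]) (simp_all add: col3 cls_def g_def tbl_def)
  have r55: "reach (Hc 3) {0,1} {5,14}" by (rule step_Hc[of 5 6 14 3 "{0,1}" "{6,14}" "{5,14}", OF _ r27]) (simp_all add: col3 cls_def g_def tbl_def)
  have r56: "reach (Hc 3) {0,1} {3,7}" by (rule step_Hc[of 3 7 13 3 "{0,1}" "{7,13}" "{3,7}", OF _ r30]) (simp_all add: col3 cls_def g_def tbl_def)
  have r57: "reach (Hc 3) {0,1} {4,7}" by (rule step_Hc[of 4 7 13 3 "{0,1}" "{7,13}" "{4,7}", OF _ r30]) (simp_all add: col3 cls_def g_def tbl_def)
  have r58: "reach (Hc 3) {0,1} {5,7}" by (rule step_Hc[of 5 7 13 3 "{0,1}" "{7,13}" "{5,7}", OF _ r30]) (simp_all add: col3 cls_def g_def tbl_def)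
  have r59: "reach (Hc 3) {0,1} {3,8}" by (rule step_Hc[of 3 8 13 3 "{0,1}" "{8,13}" "{3,8}", OF _ r32]) (simp_all add: col3 cls_def g_def tbl_def)
  have r60: "reach (Hc 3) {0,1} {4,8}" by (rule step_Hc[of 4 8 13 3 "{0,1}" "{8,13}" "{4,8}", OF _ r32]) (simp_all add: col3 cls_def g_def tbl_def)
  have r61: "reach (Hc 3) {0,1} {5,8}" by (rule step_Hc[of 5 8 13 3 "{0,1}" "{8,13}" "{5,8}", OF _ r32]) (simp_all add: col3 cls_def g_def tbl_def)
  have r62: "reach (Hc 3) {0,1} {0,3}" by (rule step_Hc[of 0 3 9 3 "{0,1}" "{0,9}" "{0,3}", OF _ r34]) (simp_all add: col3 cls_def g_def tbl_def)
  have r63: "reach (Hc 3) {0,1} {3,9}" by (rule step_Hc[of 0 3 9 3 "{0,1}" "{0,9}" "{3,9}", OF _ r34]) (simp_all add: col3 cls_def g_def tbl_def)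
  have r64: "reach (Hc 3) {0,1} {0,4}" by (rule step_Hc[of 0 4 9 3 "{0,1}" "{0,9}" "{0,4}", OF _ r34]) (simp_all add: col3 cls_def g_def tbl_def)
  have r65: "reach (Hc 3) {0,1} {4,9}" by (rule step_Hc[of 0 4 9 3 "{0,1}" "{0,9}" "{4,9}", OF _ r34]) (simp_all add: col3 cls_def g_def tbl_def)
  have r66: "reach (Hc 3) {0,1} {0,5}" by (rule step_Hc[of 0 5 9 3 "{0,1}" "{0,9}" "{0,5}", OF _ r34]) (simp_all add: col3 cls_def g_def tbl_def)
  have r67: "reach (Hc 3) {0,1} {5,9}" by (rule step_Hc[of 0 5 9 3 "{0,1}" "{0,9}" "{5,9}", OF _ r34]) (simp_all add: col3 cls_def g_def tbl_def)
  have r68: "reach (Hc 3) {0,1} {6,9}" by (rule step_Hc[of 6 9 11 3 "{0,1}" "{9,11}" "{6,9}", OF _ r35]) (simp_all add: col3 cls_def g_def tbl_def)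
  have r69: "reach (Hc 3) {0,1} {6,11}" by (rule step_Hc[of 6 9 11 3 "{0,1}" "{9,11}" "{6,11}", OF _ r35]) (simp_all add: col3 cls_def g_def tbl_def)
  have r70: "reach (Hc 3) {0,1} {7,9}" by (rule step_Hc[of 7 9 11 3 "{0,1}" "{9,11}" "{7,9}", OF _ r35]) (simp_all add: col3 cls_def g_def tbl_def)
  have r71: "reach (Hc 3) {0,1} {7,11}" by (rule step_Hc[of 7 9 11 3 "{0,1}" "{9,11}" "{7,11}", OF _ r35]) (simp_all add: col3 cls_def g_def tbl_def)
  have r72: "reach (Hc 3) {0,1} {8,9}" by (rule step_Hc[of 8 9 11 3 "{0,1}" "{9,11}" "{8,9}", OF _ r35]) (simp_all add: col3 cls_def g_def tbl_def)
  have r73: "reach (Hc 3) {0,1} {8,11}" by (rule step_Hc[of 8 9 11 3 "{0,1}" "{9,11}" "{8,11}", OF _ r35]) (simp_all add: col3 cls_def g_def tbl_def)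
  have r74: "reach (Hc 3) {0,1} {3,10}" by (rule step_Hc[of 0 3 10 3 "{0,1}" "{0,10}" "{3,10}", OF _ r36]) (simp_all add: col3 cls_def g_def tbl_def)
  have r75: "reach (Hc 3) {0,1} {4,10}" by (rule step_Hc[of 0 4 10 3 "{0,1}" "{0,10}" "{4,10}", OF _ r36]) (simp_all add: col3 cls_def g_def tbl_def)
  have r76: "reach (Hc 3) {0,1} {5,10}" by (rule step_Hc[of 0 5 10 3 "{0,1}" "{0,10}" "{5,10}", OF _ r36]) (simp_all add: col3 cls_def g_def tbl_def)
  have r77: "reach (Hc 3) {0,1} {6,10}" by (rule step_Hc[of 6 10 11 3 "{0,1}" "{10,11}" "{6,10}", OF _ r37]) (simp_all add: col3 cls_def g_def tbl_def)
  have r78: "reach (Hc 3) {0,1} {7,10}" by (rule step_Hc[of 7 10 11 3 "{0,1}" "{10,11}" "{7,10}", OF _ r37]) (simp_all add: col3 cls_def g_def tbl_def)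
  have r79: "reach (Hc 3) {0,1} {8,10}" by (rule step_Hc[of 8 10 11 3 "{0,1}" "{10,11}" "{8,10}", OF _ r37]) (simp_all add: col3 cls_def g_def tbl_def)
  have r80: "reach (Hc 3) {0,1} {3,11}" by (rule step_Hc[of 3 11 12 3 "{0,1}" "{11,12}" "{3,11}", OF _ r38]) (simp_all add: col3 cls_def g_def tbl_def)
  have r81: "reach (Hc 3) {0,1} {3,12}" by (rule step_Hc[of 3 11 12 3 "{0,1}" "{11,12}" "{3,12}", OF _ r38]) (simp_all add: col3 cls_def g_def tbl_def)
  have r82: "reach (Hc 3) {0,1} {4,11}" by (rule step_Hc[of 4 11 12 3 "{0,1}" "{11,12}" "{4,11}", OF _ r38]) (simp_all add: col3 cls_def g_def tbl_def)
  have r83: "reach (Hc 3) {0,1} {4,12}" by (rule step_Hc[of 4 11 12 3 "{0,1}" "{11,12}" "{4,12}", OF _ r38]) (simp_all add: col3 cls_def g_def tbl_def)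
  have r84: "reach (Hc 3) {0,1} {5,11}" by (rule step_Hc[of 5 11 12 3 "{0,1}" "{11,12}" "{5,11}", OF _ r38]) (simp_all add: col3 cls_def g_def tbl_def)
  have r85: "reach (Hc 3) {0,1} {5,12}" by (rule step_Hc[of 5 11 12 3 "{0,1}" "{11,12}" "{5,12}", OF _ r38]) (simp_all add: col3 cls_def g_def tbl_def)
  have r86: "reach (Hc 3) {0,1} {11,15}" by (rule step_Hc[of 11 12 15 3 "{0,1}" "{11,12}" "{11,15}", OF _ r38]) (simp_all add: col3 cls_def g_def tbl_def)
  have r87: "reach (Hc 3) {0,1} {12,15}" by (rule step_Hc[of 11 12 15 3 "{0,1}" "{11,12}" "{12,15}", OF _ r38]) (simp_all add: col3 cls_def g_def tbl_def)
  have r88: "reach (Hc 3) {0,1} {11,16}" by (rule step_Hc[of 11 12 16 3 "{0,1}" "{11,12}" "{11,16}", OF _ r38]) (simp_all add: col3 cls_def g_def tbl_def)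
  have r89: "reach (Hc 3) {0,1} {12,16}" by (rule step_Hc[of 11 12 16 3 "{0,1}" "{11,12}" "{12,16}", OF _ r38]) (simp_all add: col3 cls_def g_def tbl_def)
  have r90: "reach (Hc 3) {0,1} {1,3}" by (rule step_Hc[of 1 3 9 3 "{0,1}" "{1,9}" "{1,3}", OF _ r39]) (simp_all add: col3 cls_def g_def tbl_def)
  have r91: "reach (Hc 3) {0,1} {1,4}" by (rule step_Hc[of 1 4 9 3 "{0,1}" "{1,9}" "{1,4}", OF _ r39]) (simp_all add: col3 cls_def g_def tbl_def)
  have r92: "reach (Hc 3) {0,1} {1,5}" by (rule step_Hc[of 1 5 9 3 "{0,1}" "{1,9}" "{1,5}", OF _ r39]) (simp_all add: col3 cls_def g_def tbl_def)
  have r93: "reach (Hc 3) {0,1} {6,12}" by (rule step_Hc[of 6 9 12 3 "{0,1}" "{9,12}" "{6,12}", OF _ r41]) (simp_all add: col3 cls_def g_def tbl_def)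
  have r94: "reach (Hc 3) {0,1} {7,12}" by (rule step_Hc[of 7 9 12 3 "{0,1}" "{9,12}" "{7,12}", OF _ r41]) (simp_all add: col3 cls_def g_def tbl_def)
  have r95: "reach (Hc 3) {0,1} {8,12}" by (rule step_Hc[of 8 9 12 3 "{0,1}" "{9,12}" "{8,12}", OF _ r41]) (simp_all add: col3 cls_def g_def tbl_def)
  have r96: "reach (Hc 3) {0,1} {2,3}" by (rule step_Hc[of 2 3 9 3 "{0,1}" "{2,9}" "{2,3}", OF _ r45]) (simp_all add: col3 cls_def g_def tbl_def)
  have r97: "reach (Hc 3) {0,1} {2,4}" by (rule step_Hc[of 2 4 9 3 "{0,1}" "{2,9}" "{2,4}", OF _ r45]) (simp_all add: col3 cls_def g_def tbl_def)
  have r98: "reach (Hc 3) {0,1} {2,5}" by (rule step_Hc[of 2 5 9 3 "{0,1}" "{2,9}" "{2,5}", OF _ r45]) (simp_all add: col3 cls_def g_def tbl_def)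
  have r99: "reach (Hc 3) {0,1} {3,4}" by (rule step_Hc[of 3 4 13 3 "{0,1}" "{3,13}" "{3,4}", OF _ r48]) (simp_all add: col3 cls_def g_def tbl_def)
  have r100: "reach (Hc 3) {0,1} {3,5}" by (rule step_Hc[of 3 5 13 3 "{0,1}" "{3,13}" "{3,5}", OF _ r48]) (simp_all add: col3 cls_def g_def tbl_def)
  have r101: "reach (Hc 3) {0,1} {13,14}" by (rule step_Hc[of 3 13 14 3 "{0,1}" "{3,13}" "{13,14}", OF _ r48]) (simp_all add: col3 cls_def g_def tbl_def)
  have r102: "reach (Hc 3) {0,1} {3,15}" by (rule step_Hc[of 3 13 15 3 "{0,1}" "{3,13}" "{3,15}", OF _ r48]) (simp_all add: col3 cls_def g_def tbl_def)
  have r103: "reach (Hc 3) {0,1} {13,15}" by (rule step_Hc[of 3 13 15 3 "{0,1}" "{3,13}" "{13,15}", OF _ r48]) (simp_all add: col3 cls_def g_def tbl_def)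
  have r104: "reach (Hc 3) {0,1} {3,16}" by (rule step_Hc[of 3 13 16 3 "{0,1}" "{3,13}" "{3,16}", OF _ r48]) (simp_all add: col3 cls_def g_def tbl_def)
  have r105: "reach (Hc 3) {0,1} {13,16}" by (rule step_Hc[of 3 13 16 3 "{0,1}" "{3,13}" "{13,16}", OF _ r48]) (simp_all add: col3 cls_def g_def tbl_def)
  have r106: "reach (Hc 3) {0,1} {4,5}" by (rule step_Hc[of 4 5 13 3 "{0,1}" "{4,13}" "{4,5}", OF _ r50]) (simp_all add: col3 cls_def g_def tbl_def)
  have r107: "reach (Hc 3) {0,1} {4,15}" by (rule step_Hc[of 4 13 15 3 "{0,1}" "{4,13}" "{4,15}", OF _ r50]) (simp_all add: col3 cls_def g_def tbl_def)
  have r108: "reach (Hc 3) {0,1} {4,16}" by (rule step_Hc[of 4 13 16 3 "{0,1}" "{4,13}" "{4,16}", OF _ r50]) (simp_all add: col3 cls_def g_def tbl_def)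
  have r109: "reach (Hc 3) {0,1} {5,15}" by (rule step_Hc[of 5 13 15 3 "{0,1}" "{5,13}" "{5,15}", OF _ r52]) (simp_all add: col3 cls_def g_def tbl_def)
  have r110: "reach (Hc 3) {0,1} {5,16}" by (rule step_Hc[of 5 13 16 3 "{0,1}" "{5,13}" "{5,16}", OF _ r52]) (simp_all add: col3 cls_def g_def tbl_def)
  have r111: "reach (Hc 3) {0,1} {14,15}" by (rule step_Hc[of 3 14 15 3 "{0,1}" "{3,14}" "{14,15}", OF _ r53]) (simp_all add: col3 cls_def g_def tbl_def)
  have r112: "reach (Hc 3) {0,1} {14,16}" by (rule step_Hc[of 3 14 16 3 "{0,1}" "{3,14}" "{14,16}", OF _ r53]) (simp_all add: col3 cls_def g_def tbl_def)
  have r113: "reach (Hc 3) {0,1} {6,7}" by (rule step_Hc[of 6 7 9 3 "{0,1}" "{6,9}" "{6,7}", OF _ r68]) (simp_all add: col3 cls_def g_def tbl_def)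
  have r114: "reach (Hc 3) {0,1} {6,8}" by (rule step_Hc[of 6 8 9 3 "{0,1}" "{6,9}" "{6,8}", OF _ r68]) (simp_all add: col3 cls_def g_def tbl_def)
  have r115: "reach (Hc 3) {0,1} {7,8}" by (rule step_Hc[of 7 8 9 3 "{0,1}" "{7,9}" "{7,8}", OF _ r70]) (simp_all add: col3 cls_def g_def tbl_def)
  have r116: "reach (Hc 3) {0,1} {15,16}" by (rule step_Hc[of 11 15 16 3 "{0,1}" "{11,15}" "{15,16}", OF _ r86]) (simp_all add: col3 cls_def g_def tbl_def)
  have r117: "reach (Hc 3) {0,1} {9,13}" by (rule step_Hc[of 9 13 14 3 "{0,1}" "{13,14}" "{9,13}", OF _ r101]) (simp_all add: col3 cls_def g_def tbl_def)
  have r118: "reach (Hc 3) {0,1} {9,14}" by (rule step_Hc[of 9 13 14 3 "{0,1}" "{13,14}" "{9,14}", OF _ r101]) (simp_all add: col3 cls_def g_def tbl_def)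
  have r119: "reach (Hc 3) {0,1} {10,13}" by (rule step_Hc[of 10 13 14 3 "{0,1}" "{13,14}" "{10,13}", OF _ r101]) (simp_all add: col3 cls_def g_def tbl_def)
  have r120: "reach (Hc 3) {0,1} {10,14}" by (rule step_Hc[of 10 13 14 3 "{0,1}" "{13,14}" "{10,14}", OF _ r101]) (simp_all add: col3 cls_def g_def tbl_def)
  have r121: "reach (Hc 3) {0,1} {11,13}" by (rule step_Hc[of 11 13 14 3 "{0,1}" "{13,14}" "{11,13}", OF _ r101]) (simp_all add: col3 cls_def g_def tbl_def)
  have r122: "reach (Hc 3) {0,1} {11,14}" by (rule step_Hc[of 11 13 14 3 "{0,1}" "{13,14}" "{11,14}", OF _ r101]) (simp_all add: col3 cls_def g_def tbl_def)
  have r123: "reach (Hc 3) {0,1} {12,13}" by (rule step_Hc[of 12 13 14 3 "{0,1}" "{13,14}" "{12,13}", OF _ r101]) (simp_all add: col3 cls_def g_def tbl_def)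
  have r124: "reach (Hc 3) {0,1} {12,14}" by (rule step_Hc[of 12 13 14 3 "{0,1}" "{13,14}" "{12,14}", OF _ r101]) (simp_all add: col3 cls_def g_def tbl_def)
  have r125: "reach (Hc 3) {0,1} {6,15}" by (rule step_Hc[of 6 7 15 3 "{0,1}" "{6,7}" "{6,15}", OF _ r113]) (simp_all add: col3 cls_def g_def tbl_def)
  have r126: "reach (Hc 3) {0,1} {7,15}" by (rule step_Hc[of 6 7 15 3 "{0,1}" "{6,7}" "{7,15}", OF _ r113]) (simp_all add: col3 cls_def g_def tbl_def)
  have r127: "reach (Hc 3) {0,1} {6,16}" by (rule step_Hc[of 6 7 16 3 "{0,1}" "{6,7}" "{6,16}", OF _ r113]) (simp_all add: col3 cls_def g_def tbl_def)
  have r128: "reach (Hc 3) {0,1} {7,16}" by (rule step_Hc[of 6 7 16 3 "{0,1}" "{6,7}" "{7,16}", OF _ r113]) (simp_all add: col3 cls_def g_def tbl_def)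
  have r129: "reach (Hc 3) {0,1} {8,15}" by (rule step_Hc[of 6 8 15 3 "{0,1}" "{6,8}" "{8,15}", OF _ r114]) (simp_all add: col3 cls_def g_def tbl_def)
  have r130: "reach (Hc 3) {0,1} {8,16}" by (rule step_Hc[of 6 8 16 3 "{0,1}" "{6,8}" "{8,16}", OF _ r114]) (simp_all add: col3 cls_def g_def tbl_def)
  have r131: "reach (Hc 3) {0,1} {9,15}" by (rule step_Hc[of 9 15 16 3 "{0,1}" "{15,16}" "{9,15}", OF _ r116]) (simp_all add: col3 cls_def g_def tbl_def)
  have r132: "reach (Hc 3) {0,1} {9,16}" by (rule step_Hc[of 9 15 16 3 "{0,1}" "{15,16}" "{9,16}", OF _ r116]) (simp_all add: col3 cls_def g_def tbl_def)
  have r133: "reach (Hc 3) {0,1} {10,15}" by (rule step_Hc[of 10 15 16 3 "{0,1}" "{15,16}" "{10,15}", OF _ r116]) (simp_all add: col3 cls_def g_def tbl_def)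
  have r134: "reach (Hc 3) {0,1} {10,16}" by (rule step_Hc[of 10 15 16 3 "{0,1}" "{15,16}" "{10,16}", OF _ r116]) (simp_all add: col3 cls_def g_def tbl_def)
  have r135: "reach (Hc 3) {0,1} {9,10}" by (rule step_Hc[of 9 10 13 3 "{0,1}" "{9,13}" "{9,10}", OF _ r117]) (simp_all add: col3 cls_def g_def tbl_def)
  have all: "\<forall>b<17. \<forall>a<b. reach (Hc 3) {0,1} {a,b}"
    by (simp del: One_nat_def add: All_less_numeral All_less_one r0 r1 r2 r3 r4 r5 r6 r7 r8 r9 r10 r11 r12 r13 r14 r15 r16 r17 r18 r19 r20 r21 r22 r23 r24 r25 r26 r27 r28 r29 r30 r31 r32 r33 r34 r35 r36 r37 r38 r39 r40 r41 r42 r43 r44 r45 r46 r47 r48 r49 r50 r51 r52 r53 r54 r55 r56 r57 r58 r59 r60 r61 r62 r63 r64 r65 r66 r67 r68 r69 r70 r71 r72 r73 r74 r75 r76 r77 r78 r79 r80 r81 r82 r83 r84 r85 r86 r87 r88 r89 r90 r91 r92 r93 r94 r95 r96 r97 r98 r99 r100 r101 r102 r103 r104 r105 r106 r107 r108 r109 r110 r111 r112 r113 r114 r115 r116 r117 r118 r119 r120 r121 r122 r123 r124 r125 r126 r127 r128 r129 r130 r131 r132 r133 r134 r135)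
  show ?thesis by (rule hconn_from_base[OF Hc_card pair_cases[where R="reach (Hc 3) {0,1}", OF _ all] card01])
qed


lemma triples4:
  assumes "finite S" "card S = 4"
  shows "triples S = (\<lambda>x. S - {x}) ` S"
proof (rule set_eqI iffI)+
  fix e assume "e \<in> triples S"
  then have e: "e \<subseteq> S" "card e = 3" by (auto simp: triples_def)
  have fe: "finite e" using e(1) assms(1) finite_subset by blast
  have "card (S - e) = 1" using card_Diff_subset[OF fe e(1)] e(2) assms(2) by simp
  then obtain x where x: "S - e = {x}" by (rule card_1_singletonE)
  then have "x \<in> S" by blast
  moreover have "e = S - {x}" using x e(1) by blast
  ultimately show "e \<in> (\<lambda>x. S - {x}) ` S" by blast
next
  fix e assume "e \<in> (\<lambda>x. S - {x}) ` S"
  then obtain x where x: "x \<in> S" "e = S - {x}" by blast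
  have "card e = 3" using x assms by simp
  then show "e \<in> triples S" using x by (auto simp: triples_def)
qed

lemma key_swap:
  assumes "finite T" "u \<notin> T" "v \<notin> T" "cls u = cls v"
  shows "key (insert u T) = key (insert v T)"
  using assms by (simp add: key_def)

lemma sorted4:
  assumes "finite (Q::nat set)" "card Q = 4"
  obtains i j k l where "i < j" "j < k" "k < l" "Q = {i,j,k,l}"
proof -
  define xs where "xs = sorted_list_of_set Q"
  have xs: "sorted_wrt (<) xs" "set xs = Q" "length xs = 4"
    unfolding xs_def using assms by simp_all
  obtain i r1 where 1: "xs = i # r1" "length r1 = 3" using xs(3) by (cases xs) auto
  obtain j r2 where 2: "r1 = j # r2" "length r2 = 2" using 1(2) by (cases r1) auto
  obtain k r3 where 3: "r2 = k # r3" "length r3 = 1" using 2(2) by (cases r2) auto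
  obtain l where 4: "r3 = [l]" using 3(2) by (cases r3) auto
  have e: "xs = [i,j,k,l]" using 1 2 3 4 by simp
  have "i < j" "j < k" "k < l" using xs(1) unfolding e by simp_all
  moreover have "Q = {i,j,k,l}" using xs(2) unfolding e by simp
  ultimately show ?thesis by (rule that)
qed

lemma image4:
  fixes i j k l :: nat
  assumes "i < j" "j < k" "k < l"
  shows "(\<lambda>t. g (\<Sum>s\<in>{i,j,k,l}-{t}. 4^s)) ` {i,j,k,l} =
    {g (4^j + 4^k + 4^l), g (4^i + 4^k + 4^l), g (4^i + 4^j + 4^l), g (4^i + 4^j + 4^k)}"
proof -
  have d: "{i,j,k,l}-{i} = {j,k,l}" "{i,j,k,l}-{j} = {i,k,l}" "{i,j,k,l}-{k} = {i,j,l}" "{i,j,k,l}-{l} = {i,j,k}"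
    using assms by auto
  have s: "(\<Sum>s\<in>{a,b,c}. (4::nat)^s) = 4^a + 4^b + 4^c" if "a < b" "b < c" for a b c :: nat
    using that by simp
  show ?thesis using assms by (simp add: d s add.assoc)
qed

definition tc :: "nat \<Rightarrow> nat \<Rightarrow> nat \<Rightarrow> nat \<Rightarrow> bool" where
  "tc i j k l \<longleftrightarrow> card {g (4^j + 4^k + 4^l), g (4^i + 4^k + 4^l), g (4^i + 4^j + 4^l), g (4^i + 4^j + 4^k)} \<noteq> 4"

lemma gv_3: "g 3 = 3" by (simp add: g_def tbl_def)
lemma gv_6: "g 6 = 2" by (simp add: g_def tbl_def)
lemma gv_18: "g 18 = 3" by (simp add: g_def tbl_def)
lemma gv_66: "g 66 = 0" by (simp add: g_def tbl_def)
lemma gv_258: "g 258 = 3" by (simp add: g_def tbl_def)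
lemma gv_1026: "g 1026 = 1" by (simp add: g_def tbl_def)
lemma gv_4098: "g 4098 = 3" by (simp add: g_def tbl_def)
lemma gv_9: "g 9 = 0" by (simp add: g_def tbl_def)
lemma gv_21: "g 21 = 2" by (simp add: g_def tbl_def)
lemma gv_69: "g 69 = 3" by (simp add: g_def tbl_def)
lemma gv_261: "g 261 = 0" by (simp add: g_def tbl_def)
lemma gv_1029: "g 1029 = 1" by (simp add: g_def tbl_def)
lemma gv_4101: "g 4101 = 1" by (simp add: g_def tbl_def)
lemma gv_33: "g 33 = 2" by (simp add: g_def tbl_def)
lemma gv_81: "g 81 = 1" by (simp add: g_def tbl_def)
lemma gv_273: "g 273 = 1" by (simp add: g_def tbl_def)
lemma gv_1041: "g 1041 = 3" by (simp add: g_def tbl_def)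
lemma gv_4113: "g 4113 = 0" by (simp add: g_def tbl_def)
lemma gv_129: "g 129 = 2" by (simp add: g_def tbl_def)
lemma gv_321: "g 321 = 3" by (simp add: g_def tbl_def)
lemma gv_1089: "g 1089 = 0" by (simp add: g_def tbl_def)
lemma gv_4161: "g 4161 = 1" by (simp add: g_def tbl_def)
lemma gv_513: "g 513 = 3" by (simp add: g_def tbl_def)
lemma gv_1281: "g 1281 = 0" by (simp add: g_def tbl_def)
lemma gv_4353: "g 4353 = 2" by (simp add: g_def tbl_def)
lemma gv_2049: "g 2049 = 0" by (simp add: g_def tbl_def)
lemma gv_5121: "g 5121 = 2" by (simp add: g_def tbl_def)
lemma gv_8193: "g 8193 = 2" by (simp add: g_def tbl_def)
lemma gv_12: "g 12 = 1" by (simp add: g_def tbl_def)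
lemma gv_24: "g 24 = 0" by (simp add: g_def tbl_def)
lemma gv_72: "g 72 = 2" by (simp add: g_def tbl_def)
lemma gv_264: "g 264 = 1" by (simp add: g_def tbl_def)
lemma gv_1032: "g 1032 = 3" by (simp add: g_def tbl_def)
lemma gv_4104: "g 4104 = 2" by (simp add: g_def tbl_def)
lemma gv_36: "g 36 = 0" by (simp add: g_def tbl_def)
lemma gv_84: "g 84 = 1" by (simp add: g_def tbl_def)
lemma gv_276: "g 276 = 2" by (simp add: g_def tbl_def)
lemma gv_1044: "g 1044 = 3" by (simp add: g_def tbl_def)
lemma gv_4116: "g 4116 = 0" by (simp add: g_def tbl_def)
lemma gv_132: "g 132 = 1" by (simp add: g_def tbl_def)
lemma gv_324: "g 324 = 1" by (simp add: g_def tbl_def)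
lemma gv_1092: "g 1092 = 0" by (simp add: g_def tbl_def)
lemma gv_4164: "g 4164 = 0" by (simp add: g_def tbl_def)
lemma gv_516: "g 516 = 3" by (simp add: g_def tbl_def)
lemma gv_1284: "g 1284 = 2" by (simp add: g_def tbl_def)
lemma gv_4356: "g 4356 = 2" by (simp add: g_def tbl_def)
lemma gv_2052: "g 2052 = 3" by (simp add: g_def tbl_def)
lemma gv_5124: "g 5124 = 3" by (simp add: g_def tbl_def)
lemma gv_8196: "g 8196 = 1" by (simp add: g_def tbl_def)
lemma gv_48: "g 48 = 3" by (simp add: g_def tbl_def)
lemma gv_96: "g 96 = 3" by (simp add: g_def tbl_def)
lemma gv_288: "g 288 = 1" by (simp add: g_def tbl_def)
lemma gv_1056: "g 1056 = 2" by (simp add: g_def tbl_def)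
lemma gv_4128: "g 4128 = 3" by (simp add: g_def tbl_def)
lemma gv_144: "g 144 = 0" by (simp add: g_def tbl_def)
lemma gv_336: "g 336 = 3" by (simp add: g_def tbl_def)
lemma gv_1104: "g 1104 = 1" by (simp add: g_def tbl_def)
lemma gv_4176: "g 4176 = 2" by (simp add: g_def tbl_def)
lemma gv_528: "g 528 = 2" by (simp add: g_def tbl_def)
lemma gv_1296: "g 1296 = 1" by (simp add: g_def tbl_def)
lemma gv_4368: "g 4368 = 0" by (simp add: g_def tbl_def)
lemma gv_2064: "g 2064 = 2" by (simp add: g_def tbl_def)
lemma gv_5136: "g 5136 = 0" by (simp add: g_def tbl_def)
lemma gv_8208: "g 8208 = 1" by (simp add: g_def tbl_def)
lemma gv_384: "g 384 = 2" by (simp add: g_def tbl_def)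
lemma gv_1152: "g 1152 = 3" by (simp add: g_def tbl_def)
lemma gv_4224: "g 4224 = 0" by (simp add: g_def tbl_def)
lemma gv_576: "g 576 = 0" by (simp add: g_def tbl_def)
lemma gv_1344: "g 1344 = 0" by (simp add: g_def tbl_def)
lemma gv_4416: "g 4416 = 2" by (simp add: g_def tbl_def)
lemma gv_2112: "g 2112 = 3" by (simp add: g_def tbl_def)
lemma gv_5184: "g 5184 = 2" by (simp add: g_def tbl_def)
lemma gv_8256: "g 8256 = 3" by (simp add: g_def tbl_def)
lemma gv_1536: "g 1536 = 1" by (simp add: g_def tbl_def)
lemma gv_4608: "g 4608 = 3" by (simp add: g_def tbl_def)
lemma gv_2304: "g 2304 = 3" by (simp add: g_def tbl_def)
lemma gv_5376: "g 5376 = 1" by (simp add: g_def tbl_def)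
lemma gv_8448: "g 8448 = 3" by (simp add: g_def tbl_def)
lemma gv_6144: "g 6144 = 1" by (simp add: g_def tbl_def)
lemma gv_9216: "g 9216 = 0" by (simp add: g_def tbl_def)
lemma tc_0123: "tc 0 1 2 3"
  unfolding tc_def by (simp add: card_insert_if gv_84 gv_81 gv_69 gv_21)
lemma tc_0124: "tc 0 1 2 4"
  unfolding tc_def by (simp add: card_insert_if gv_276 gv_273 gv_261 gv_21)
lemma tc_0125: "tc 0 1 2 5"
  unfolding tc_def by (simp add: card_insert_if gv_1044 gv_1041 gv_1029 gv_21)
lemma tc_0126: "tc 0 1 2 6"
  unfolding tc_def by (simp add: card_insert_if gv_4116 gv_4113 gv_4101 gv_21)
lemma tc_0134: "tc 0 1 3 4"
  unfolding tc_def by (simp add: card_insert_if gv_324 gv_321 gv_261 gv_69)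
lemma tc_0135: "tc 0 1 3 5"
  unfolding tc_def by (simp add: card_insert_if gv_1092 gv_1089 gv_1029 gv_69)
lemma tc_0136: "tc 0 1 3 6"
  unfolding tc_def by (simp add: card_insert_if gv_4164 gv_4161 gv_4101 gv_69)
lemma tc_0145: "tc 0 1 4 5"
  unfolding tc_def by (simp add: card_insert_if gv_1284 gv_1281 gv_1029 gv_261)
lemma tc_0146: "tc 0 1 4 6"
  unfolding tc_def by (simp add: card_insert_if gv_4356 gv_4353 gv_4101 gv_261)
lemma tc_0156: "tc 0 1 5 6"
  unfolding tc_def by (simp add: card_insert_if gv_5124 gv_5121 gv_4101 gv_1029)
lemma tc_0234: "tc 0 2 3 4"
  unfolding tc_def by (simp add: card_insert_if gv_336 gv_321 gv_273 gv_81)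
lemma tc_0235: "tc 0 2 3 5"
  unfolding tc_def by (simp add: card_insert_if gv_1104 gv_1089 gv_1041 gv_81)
lemma tc_0236: "tc 0 2 3 6"
  unfolding tc_def by (simp add: card_insert_if gv_4176 gv_4161 gv_4113 gv_81)
lemma tc_0245: "tc 0 2 4 5"
  unfolding tc_def by (simp add: card_insert_if gv_1296 gv_1281 gv_1041 gv_273)
lemma tc_0246: "tc 0 2 4 6"
  unfolding tc_def by (simp add: card_insert_if gv_4368 gv_4353 gv_4113 gv_273)
lemma tc_0256: "tc 0 2 5 6"
  unfolding tc_def by (simp add: card_insert_if gv_5136 gv_5121 gv_4113 gv_1041)
lemma tc_0345: "tc 0 3 4 5"
  unfolding tc_def by (simp add: card_insert_if gv_1344 gv_1281 gv_1089 gv_321)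
lemma tc_0346: "tc 0 3 4 6"
  unfolding tc_def by (simp add: card_insert_if gv_4416 gv_4353 gv_4161 gv_321)
lemma tc_0356: "tc 0 3 5 6"
  unfolding tc_def by (simp add: card_insert_if gv_5184 gv_5121 gv_4161 gv_1089)
lemma tc_0456: "tc 0 4 5 6"
  unfolding tc_def by (simp add: card_insert_if gv_5376 gv_5121 gv_4353 gv_1281)
lemma tc_1234: "tc 1 2 3 4"
  unfolding tc_def by (simp add: card_insert_if gv_336 gv_324 gv_276 gv_84)
lemma tc_1235: "tc 1 2 3 5"
  unfolding tc_def by (simp add: card_insert_if gv_1104 gv_1092 gv_1044 gv_84)
lemma tc_1236: "tc 1 2 3 6"
  unfolding tc_def by (simp add: card_insert_if gv_4176 gv_4164 gv_4116 gv_84)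
lemma tc_1245: "tc 1 2 4 5"
  unfolding tc_def by (simp add: card_insert_if gv_1296 gv_1284 gv_1044 gv_276)
lemma tc_1246: "tc 1 2 4 6"
  unfolding tc_def by (simp add: card_insert_if gv_4368 gv_4356 gv_4116 gv_276)
lemma tc_1256: "tc 1 2 5 6"
  unfolding tc_def by (simp add: card_insert_if gv_5136 gv_5124 gv_4116 gv_1044)
lemma tc_1345: "tc 1 3 4 5"
  unfolding tc_def by (simp add: card_insert_if gv_1344 gv_1284 gv_1092 gv_324)
lemma tc_1346: "tc 1 3 4 6"
  unfolding tc_def by (simp add: card_insert_if gv_4416 gv_4356 gv_4164 gv_324)
lemma tc_1356: "tc 1 3 5 6"
  unfolding tc_def by (simp add: card_insert_if gv_5184 gv_5124 gv_4164 gv_1092)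
lemma tc_1456: "tc 1 4 5 6"
  unfolding tc_def by (simp add: card_insert_if gv_5376 gv_5124 gv_4356 gv_1284)
lemma tc_2345: "tc 2 3 4 5"
  unfolding tc_def by (simp add: card_insert_if gv_1344 gv_1296 gv_1104 gv_336)
lemma tc_2346: "tc 2 3 4 6"
  unfolding tc_def by (simp add: card_insert_if gv_4416 gv_4368 gv_4176 gv_336)
lemma tc_2356: "tc 2 3 5 6"
  unfolding tc_def by (simp add: card_insert_if gv_5184 gv_5136 gv_4176 gv_1104)
lemma tc_2456: "tc 2 4 5 6"
  unfolding tc_def by (simp add: card_insert_if gv_5376 gv_5136 gv_4368 gv_1296)
lemma tc_3456: "tc 3 4 5 6"
  unfolding tc_def by (simp add: card_insert_if gv_5376 gv_5184 gv_4416 gv_1344)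

lemma typecheck_all: "\<forall>l<7. \<forall>k<l. \<forall>j<k. \<forall>i<j. tc i j k l"
  by (simp del: One_nat_def add: All_less_numeral All_less_one tc_0123 tc_0124 tc_0125 tc_0126 tc_0134 tc_0135 tc_0136 tc_0145 tc_0146 tc_0156 tc_0234 tc_0235 tc_0236 tc_0245 tc_0246 tc_0256 tc_0345 tc_0346 tc_0356 tc_0456 tc_1234 tc_1235 tc_1236 tc_1245 tc_1246 tc_1256 tc_1345 tc_1346 tc_1356 tc_1456 tc_2345 tc_2346 tc_2356 tc_2456 tc_3456)

lemma typecheck:
  assumes "Q \<subseteq> {0..<7}" "card Q = 4"
  shows "card ((\<lambda>t. g (\<Sum>s\<in>Q-{t}. 4^s)) ` Q) \<noteq> 4"
proof -
  have "finite Q" using assms(1) finite_subset by blast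
  then obtain i j k l where ijkl: "i < j" "j < k" "k < l" "Q = {i,j,k,l}"
    using sorted4 assms(2) by blast
  then have "l < 7" using assms(1) by auto
  have c: "card {g (4^j + 4^k + 4^l), g (4^i + 4^k + 4^l), g (4^i + 4^j + 4^l), g (4^i + 4^j + 4^k)} \<noteq> 4"
    using typecheck_all[rule_format, OF \<open>l < 7\<close> ijkl(3) ijkl(2) ijkl(1)] unfolding tc_def .
  have e: "(\<lambda>t. g (\<Sum>s\<in>Q-{t}. 4^s)) ` Q =
    {g (4^j + 4^k + 4^l), g (4^i + 4^k + 4^l), g (4^i + 4^j + 4^l), g (4^i + 4^j + 4^k)}"
    unfolding ijkl(4) by (rule image4[OF ijkl(1-3)])
  show ?thesis unfolding e by (rule c)
qed

lemma no_multi: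
  assumes S: "S \<subseteq> {0..<17}" "card S = 4"
  shows "\<not> multicoloured col S"
proof
  assume m: "multicoloured col S"
  have fS: "finite S" using S(2) by (intro card_ge_0_finite) simp
  define f where "f = (\<lambda>x. col (S - {x}))"
  have img: "col ` triples S = f ` S"
    unfolding triples4[OF fS S(2)] f_def by (simp add: image_image)
  have "card (f ` S) = card S" using m S(2) img by (simp add: multicoloured_def)
  then have injf: "inj_on f S" by (rule eq_card_imp_inj_on[OF fS])
  show False
  proof (cases "inj_on cls S")
    case False
    then obtain u v where uv: "u \<in> S" "v \<in> S" "u \<noteq> v" "cls u = cls v"
      unfolding inj_on_def by blast
    define T where "T = S - {u,v}"
    have 1: "S - {u} = insert v T" and 2: "S - {v} = insert u T"
      using uv unfolding T_def by auto
    have "key (insert v T) = key (insert u T)"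
      by (rule key_swap) (use fS uv in \<open>auto simp: T_def\<close>)
    then have "f u = f v" unfolding f_def col_def using 1 2 by simp
    then show False using injf uv inj_onD by metis
  next
    case True
    define Q where "Q = cls ` S"
    have cQ: "card Q = 4" unfolding Q_def using card_image[OF True] S(2) by simp
    have sQ: "Q \<subseteq> {0..<7}" unfolding Q_def using cls_lt by auto
    define h where "h = (\<lambda>t. g (\<Sum>s\<in>Q-{t}. 4^s))"
    have fx: "f x = h (cls x)" if x: "x \<in> S" for x
    proof -
      have inj2: "inj_on cls (S - {x})" using True by (rule inj_on_subset) blast
      have im: "cls ` (S - {x}) = Q - {cls x}"
        unfolding Q_def using inj_on_image_set_diff[OF True, of S "{x}"] x by auto
      have "key (S - {x}) = (\<Sum>s\<in>cls ` (S - {x}). 4^s)"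
        unfolding key_def by (simp add: sum.reindex[OF inj2])
      then show ?thesis unfolding f_def col_def h_def using im by simp
    qed
    have "f ` S = h ` Q" unfolding Q_def image_image using fx by (auto simp: image_iff)
    then have "card (h ` Q) = 4" using \<open>card (f ` S) = card S\<close> S(2) by simp
    then show False using typecheck[OF sQ cQ] unfolding h_def by simp
  qed
qed

theorem proposition10:
  shows "\<exists>c :: nat set \<Rightarrow> nat. connected_colouring {0..<17} 4 c \<and>
           \<not> (\<exists>S. S \<subseteq> {0..<17} \<and> card S = 4 \<and> multicoloured c S)"
proof (intro exI conjI)
  have "\<forall>i<4. hconnected {0..<17} {e \<in> triples {0..<17}. col e = i}"
    using conn0 conn1 conn2 conn3 unfolding Hc_def
    by (simp del: One_nat_def add: All_less_numeral All_less_one)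
  then show "connected_colouring {0..<17} 4 col"
    unfolding connected_colouring_def using g_lt by (simp add: col_def)
  show "\<not> (\<exists>S. S \<subseteq> {0..<17} \<and> card S = 4 \<and> multicoloured col S)"
    using no_multi by blast
qed

end
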